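(* Let $G\subseteq W(\mathsf D_n)$ satisfy the (H1), relative minimality and minimality conditions, let $O=\{1,\dots,n'\}$ (after relabelling) be an orbit of $pr(G)$ on $\{1,\dots,n\}$, and let $\overline G_O=P_O(G)$, regarded as a subgroup of $W(\mathsf D_{n'})$ if $\sigma(g_O)=1$ for all $g\in G$ and as a subgroup of $W(\mathsf D_{n'+1})$ otherwise, acting on the corresponding lattice $\mathbb Z^{N+2}=\bigoplus_{i=-1}^{N}\mathbb Z\bar l_i$ ($N=n'$ resp. $N=n'+1$) via $\Phi$. Then $\overline G_O$ satisfies both the relative minimality condition and the (H1) condition.
   Context: For $m\ge1$, $W(\mathsf B_m)$ is the group of signed permutations of symbols $j^\pm$ ($1\le j\le m$), generated by $\mathfrak S_m$ and involutions $c_j$; elements are $c_{j_1}\cdots c_{j_t}\tau$; $pr(\cdot)=\tau$; $\sigma(\cdot)=(-1)^t$; $W(\mathsf D_m)=\ker\sigma$. Signed permutation cycles of $g$: $\beta_\gamma=(\prod_{j_i\in\mathrm{supp}\,\gamma}c_{j_i})\gamma$ for each cycle $\gamma$ of $\tau$ (fixed points included). $W(\mathsf D_m)$ acts on $\bigoplus_{i=-1}^m\mathbb Zl_i$ via $\Phi$: for $g=c_{j_1}\cdots c_{j_t}\tau$ with $s(i)=-1$ iff $i\in\{j_1,\dots,j_t\}$, $\Phi(g)l_0=l_0$, $\Phi(g)l_{-1}=l_{-1}+\frac t2l_0-\sum_{s(i)=-1}l_i$, and $\Phi(g)l_v=l_u$ or $l_0-l_u$ ($u=\tau^{-1}(v)$)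 according as $s(u)=1$ or $-1$; for $m=n$ this lattice is $\mathrm{Pic}(\bar X)$ of a standard conic bundle with $n$ degenerate fibers. A subgroup $H\subseteq W(\mathsf D_m)$ satisfies (H1) if $\mathrm H^1(H',\mathbb Z^{m+2})=0$ for all subgroups $H'\subseteq H$, and relative minimality if its invariants are $\mathbb Zl_0\oplus\mathbb ZK$, $K=-2(l_{-1}+l_0)+\sum_{i=1}^ml_i$. Minimality of $G$: $G$ corresponds to a $k$-minimal conic bundle; in particular for each $j$, $j^+$ and $j^-$ lie in one $G$-orbit. For $g\in G$, $g_O$ is the product of the signed permutation cycles of $g$ with underlying cycle in $O$, and $P_O(g)=g_Oc_{n'+1}$ if $\sigma(g_O)=-1$, $P_O(g)=g_O$ otherwise. *)

theory Defs
  imports "HOL-Combinatorics.Permutations"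
begin

text \<open>Signed permutations of the symbols j+ and j- (1 \<le> j \<le> m) are encoded as odd
  permutations of the integers: j+ is the integer j and j- is the integer -j.\<close>

definition signed_perm :: "nat \<Rightarrow> (int \<Rightarrow> int) \<Rightarrow> bool" where
  "signed_perm m f \<longleftrightarrow> f permutes ({- int m..int m} - {0}) \<and> (\<forall>x. f (- x) = - f x)"

definition WB :: "nat \<Rightarrow> (int \<Rightarrow> int) set" where
  "WB m = {f. signed_perm m f}"

definition pr :: "(int \<Rightarrow> int) \<Rightarrow> int \<Rightarrow> int" where
  "pr f = (\<lambda>i. \<bar>f i\<bar>)"

text \<open>Writing g = c_{j1}...c_{jt} tau, the set {j1,...,jt} is the set of indices
  i with s(i) = -1, i.e. those i in {1..m} sent to a negative symbol
  (products are composed left to right, as in the paper).\<close>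
definition negset :: "nat \<Rightarrow> (int \<Rightarrow> int) \<Rightarrow> int set" where
  "negset m f = {i \<in> {1..int m}. f i < 0}"

definition tcount :: "nat \<Rightarrow> (int \<Rightarrow> int) \<Rightarrow> nat" where
  "tcount m f = card (negset m f)"

definition sgn_char :: "nat \<Rightarrow> (int \<Rightarrow> int) \<Rightarrow> int" where
  "sgn_char m f = (-1) ^ tcount m f"

definition WD :: "nat \<Rightarrow> (int \<Rightarrow> int) set" where
  "WD m = {f \<in> WB m. sgn_char m f = 1}"

definition sp_subgroup :: "nat \<Rightarrow> (int \<Rightarrow> int) set \<Rightarrow> bool" where
  "sp_subgroup m H \<longleftrightarrow> H \<subseteq> WB m \<and> id \<in> H \<and>
     (\<forall>f\<in>H. \<forall>g\<in>H. f \<circ> g \<in> H) \<and> (\<forall>f\<in>H. inv f \<in> H)"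

text \<open>The lattice Z^{m+2} = (+)_{i=-1}^m Z l_i, as integer vectors supported on {-1..m}.\<close>
definition lattice :: "nat \<Rightarrow> (int \<Rightarrow> int) set" where
  "lattice m = {x. \<forall>j. j \<notin> {-1..int m} \<longrightarrow> x j = 0}"

definition lb :: "int \<Rightarrow> int \<Rightarrow> int" where
  "lb i = (\<lambda>j. if j = i then 1 else 0)"

definition phiB :: "nat \<Rightarrow> (int \<Rightarrow> int) \<Rightarrow> int \<Rightarrow> int \<Rightarrow> int" where
  "phiB m f i =
    (if i = 0 then lb 0
     else if i = -1 then
       (\<lambda>j. lb (-1) j + int (tcount m f div 2) * lb 0 j - (\<Sum>k\<in>negset m f. lb k j))
     else (let w = inv f i; u = \<bar>w\<bar> in
           if w > 0 then lb u else (\<lambda>j. lb 0 j - lb u j)))"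

definition Phi :: "nat \<Rightarrow> (int \<Rightarrow> int) \<Rightarrow> (int \<Rightarrow> int) \<Rightarrow> (int \<Rightarrow> int)" where
  "Phi m f x = (\<lambda>j. \<Sum>i\<in>{-1..int m}. x i * phiB m f i j)"

text \<open>H^1(H, Z^{m+2}) = 0: every crossed homomorphism is principal. The group law of
  the paper is g h = (first g, then h), i.e. the function h o g; Phi is a
  homomorphism for this law.\<close>
definition H1_vanishes :: "nat \<Rightarrow> (int \<Rightarrow> int) set \<Rightarrow> bool" where
  "H1_vanishes m H \<longleftrightarrow>
    (\<forall>c :: (int \<Rightarrow> int) \<Rightarrow> (int \<Rightarrow> int).
       (\<forall>g\<in>H. c g \<in> lattice m) \<and>
       (\<forall>g\<in>H. \<forall>h\<in>H. c (h \<circ> g) = (\<lambda>j. c g j + Phi m g (c h) j))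
       \<longrightarrow> (\<exists>a\<in>lattice m. \<forall>g\<in>H. c g = (\<lambda>j. Phi m g a j - a j)))"

definition cond_H1 :: "nat \<Rightarrow> (int \<Rightarrow> int) set \<Rightarrow> bool" where
  "cond_H1 m H \<longleftrightarrow> (\<forall>H'. sp_subgroup m H' \<and> H' \<subseteq> H \<longrightarrow> H1_vanishes m H')"

definition Kvec :: "nat \<Rightarrow> int \<Rightarrow> int" where
  "Kvec m = (\<lambda>j. -2 * (lb (-1) j + lb 0 j) + (\<Sum>i\<in>{1..int m}. lb i j))"

definition rel_minimal :: "nat \<Rightarrow> (int \<Rightarrow> int) set \<Rightarrow> bool" where
  "rel_minimal m H \<longleftrightarrow>
    {x \<in> lattice m. \<forall>g\<in>H. Phi m g x = x} =
    {(\<lambda>j. a * lb 0 j + b * Kvec m j) | a b :: int. True}"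

text \<open>Minimality (the combinatorial consequence stated in the paper): for each j,
  j+ and j- lie in one G-orbit.\<close>
definition minimal :: "nat \<Rightarrow> (int \<Rightarrow> int) set \<Rightarrow> bool" where
  "minimal m G \<longleftrightarrow> (\<forall>j\<in>{1..int m}. \<exists>g\<in>G. g j = - j)"

definition is_pr_orbit :: "nat \<Rightarrow> (int \<Rightarrow> int) set \<Rightarrow> int set \<Rightarrow> bool" where
  "is_pr_orbit n G Orb \<longleftrightarrow> Orb \<noteq> {} \<and> Orb \<subseteq> {1..int n} \<and>
     (\<forall>i\<in>Orb. {pr g i | g. g \<in> G} = Orb)"

text \<open>g_O: product of the signed permutation cycles of g whose underlying cycle
  lies in O = {1..n'}; sigma(g_O); and P_O(g).\<close>
definition gO :: "nat \<Rightarrow> (int \<Rightarrow> int) \<Rightarrow> int \<Rightarrow> int" where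
  "gO n' g = (\<lambda>x. if \<bar>x\<bar> \<in> {1..int n'} then g x else x)"

definition PO :: "nat \<Rightarrow> (int \<Rightarrow> int) \<Rightarrow> int \<Rightarrow> int" where
  "PO n' g = (if sgn_char n' (gO n' g) = -1
              then (\<lambda>x. if \<bar>x\<bar> = int n' + 1 then - x else gO n' g x)
              else gO n' g)"

end

theory Submission
  imports Defs
begin

definition SS :: "nat \<Rightarrow> int set" where "SS m = {- int m..int m} - {0}"

lemma sp_perm: "signed_perm m f \<Longrightarrow> f permutes SS m"
  by (simp add: signed_perm_def SS_def)

lemma sp_odd: "signed_perm m f \<Longrightarrow> f (- x) = - f x"
  by (simp add: signed_perm_def)

lemma sp_0: "signed_perm m f \<Longrightarrow> f 0 = 0"
  using sp_odd[of m f 0] by simp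

lemma sp_out: "signed_perm m f \<Longrightarrow> x \<notin> SS m \<Longrightarrow> f x = x"
  by (rule permutes_not_in[OF sp_perm])

lemma sp_bij: "signed_perm m f \<Longrightarrow> bij f"
  using sp_perm permutes_bij by blast

lemma sp_inv_f: "signed_perm m f \<Longrightarrow> inv f (f x) = x"
  by (rule inv_f_f[OF bij_is_inj[OF sp_bij]])

lemma sp_f_inv:
  assumes "signed_perm m f" shows "f (inv f x) = x"
proof -
  have "surj f" using sp_bij[OF assms] by (simp add: bij_is_surj)
  then show ?thesis by (simp add: surj_f_inv_f)
qed

lemma sp_inv: "signed_perm m f \<Longrightarrow> signed_perm m (inv f)"
proof -
  assume a: "signed_perm m f"
  have "inv f permutes SS m" by (rule permutes_inv[OF sp_perm[OF a]])
  moreover have "inv f (- x) = - inv f x" for x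
  proof -
    have "f (- inv f x) = - f (inv f x)" by (rule sp_odd[OF a])
    also have "\<dots> = - x" by (simp only: sp_f_inv[OF a])
    finally have "inv f (f (- inv f x)) = inv f (- x)" by simp
    then show ?thesis by (simp only: sp_inv_f[OF a])
  qed
  ultimately show ?thesis by (simp add: signed_perm_def SS_def)
qed

lemma sp_comp: "signed_perm m f \<Longrightarrow> signed_perm m g \<Longrightarrow> signed_perm m (f \<circ> g)"
  unfolding signed_perm_def by (simp add: permutes_compose)

lemma sp_id: "signed_perm m id"
  by (simp add: signed_perm_def permutes_id)

lemma sp_inS: "signed_perm m f \<Longrightarrow> (f x \<in> SS m) = (x \<in> SS m)"
  by (rule permutes_in_image[OF sp_perm])

lemma sp_range: "signed_perm m f \<Longrightarrow> i \<in> {1..int m} \<Longrightarrow> \<bar>f i\<bar> \<in> {1..int m} \<and> f i \<noteq> 0"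
proof -
  assume a: "signed_perm m f" "i \<in> {1..int m}"
  then have "i \<in> SS m" by (auto simp: SS_def)
  then have "f i \<in> SS m" by (simp add: sp_inS[OF a(1)])
  then show ?thesis by (auto simp: SS_def)
qed

lemma sp_inv_abs: "signed_perm m f \<Longrightarrow> inv f \<bar>f j\<bar> = (if f j < 0 then - j else j)"
proof -
  assume a: "signed_perm m f"
  show ?thesis
  proof (cases "f j < 0")
    case True
    then have "\<bar>f j\<bar> = - f j" by simp
    also have "\<dots> = f (- j)" by (rule sp_odd[OF a, symmetric])
    finally have "inv f \<bar>f j\<bar> = inv f (f (- j))" by simp
    also have "\<dots> = - j" by (rule sp_inv_f[OF a])
    finally show ?thesis using True by simp
  next
    case False
    then show ?thesis by (simp add: sp_inv_f[OF a])
  qed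
qed

lemma sp_f_abs_inv: assumes a: "signed_perm m f" shows "f \<bar>inv f i\<bar> = (if inv f i < 0 then - i else i)"
proof (cases "inv f i < 0")
  case True
  then have "\<bar>inv f i\<bar> = - inv f i" by simp
  then show ?thesis using True by (simp add: sp_odd[OF a] sp_f_inv[OF a])
next
  case False
  then show ?thesis by (simp add: sp_f_inv[OF a])
qed

lemma sp_inj: "signed_perm m f \<Longrightarrow> f x = f y \<Longrightarrow> x = y"
  by (metis sp_inv_f)

lemma WB_fin: "finite (WB m)"
proof -
  have "WB m \<subseteq> {p. p permutes SS m}" by (auto simp: WB_def sp_perm)
  moreover have "finite {p. p permutes SS m}" by (rule finite_permutations) (simp add: SS_def)
  ultimately show ?thesis using finite_subset by blast
qed

lemma lb_eq: "lb k j = (if k = j then 1 else 0)" by (auto simp: lb_def)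

lemma sum_lb: "finite A \<Longrightarrow> (\<Sum>k\<in>A. lb k j) = (if j \<in> A then 1 else 0)"
  by (simp add: lb_eq sum.delta)

lemma negset_fin: "finite (negset m f)"
  by (rule finite_subset[of _ "{1..int m}"]) (auto simp: negset_def)

lemma int_split: "{-1..int m} = insert (-1) (insert 0 {1..int m})" by auto

lemma phiB_pos: "i \<in> {1..int m} \<Longrightarrow> signed_perm m g \<Longrightarrow>
  phiB m g i j = (if inv g i < 0 then lb 0 j - lb \<bar>inv g i\<bar> j else lb \<bar>inv g i\<bar> j)"
proof -
  assume a: "i \<in> {1..int m}" "signed_perm m g"
  have "inv g i \<noteq> 0" using sp_range[OF sp_inv[OF a(2)] a(1)] by simp
  then show ?thesis using a(1) by (auto simp: phiB_def Let_def)
qed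

lemma Phi_split: "Phi m g x j = x (-1) * phiB m g (-1) j + x 0 * lb 0 j + (\<Sum>i\<in>{1..int m}. x i * phiB m g i j)"
  unfolding Phi_def int_split by (simp add: phiB_def)

lemma abs_inv_eq: assumes a: "signed_perm m g" and i: "i \<in> {1..int m}"
  shows "(\<bar>inv g i\<bar> = j) = (j \<ge> 1 \<and> i = \<bar>g j\<bar>)"
proof
  assume h: "\<bar>inv g i\<bar> = j"
  have r: "\<bar>inv g i\<bar> \<in> {1..int m}" using sp_range[OF sp_inv[OF a] i] by simp
  have "g \<bar>inv g i\<bar> = (if inv g i < 0 then - i else i)" by (rule sp_f_abs_inv[OF a])
  then show "j \<ge> 1 \<and> i = \<bar>g j\<bar>" using h r i by auto
next
  assume h: "j \<ge> 1 \<and> i = \<bar>g j\<bar>"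
  then have "inv g i = (if g j < 0 then - j else j)" using sp_inv_abs[OF a, of j] by simp
  then show "\<bar>inv g i\<bar> = j" using h by auto
qed

lemma PhiC:
  assumes a: "signed_perm m g"
  shows "Phi m g x j = (if j = -1 then x (-1)
   else if j = 0 then x 0 + x (-1) * int (tcount m g div 2) + (\<Sum>i\<in>{1..int m}. if inv g i < 0 then x i else 0)
   else if 1 \<le> j \<and> j \<le> int m then (if g j < 0 then - x (-1) - x (- g j) else x (g j))
   else 0)"
proof -
  have rng: "\<And>i. i \<in> {1..int m} \<Longrightarrow> \<bar>inv g i\<bar> \<in> {1..int m}"
    using sp_range[OF sp_inv[OF a]] by blast
  have m1: "\<And>j. phiB m g (-1) j = lb (-1) j + int (tcount m g div 2) * lb 0 j - (if j \<in> negset m g then 1 else 0)"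
    by (simp add: phiB_def sum_lb[OF negset_fin])
  consider "j = -1" | "j = 0" | "1 \<le> j \<and> j \<le> int m" | "j < -1 \<or> j > int m" by linarith
  then show ?thesis
  proof cases
    case 1
    have "(\<Sum>i\<in>{1..int m}. x i * phiB m g i j) = 0"
    proof (rule sum.neutral, intro ballI)
      fix i assume i: "i \<in> {1..int m}"
      show "x i * phiB m g i j = 0" using phiB_pos[OF i a] rng[OF i] 1 by (auto simp: lb_def)
    qed
    then show ?thesis using 1 by (simp add: Phi_split m1 lb_def negset_def)
  next
    case 2
    have "(\<Sum>i\<in>{1..int m}. x i * phiB m g i j) = (\<Sum>i\<in>{1..int m}. if inv g i < 0 then x i else 0)"
    proof (rule sum.cong[OF refl])
      fix i assume i: "i \<in> {1..int m}"
      show "x i * phiB m g i j = (if inv g i < 0 then x i else 0)" using phiB_pos[OF i a] rng[OF i] 2 by (auto simp: lb_def)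
    qed
    then show ?thesis using 2 by (simp add: Phi_split m1 lb_def negset_def)
  next
    case 3
    have gj: "\<bar>g j\<bar> \<in> {1..int m}" "g j \<noteq> 0" using sp_range[OF a, of j] 3 by auto
    have "(\<Sum>i\<in>{1..int m}. x i * phiB m g i j) = (\<Sum>i\<in>{1..int m}. if i = \<bar>g j\<bar> then (if g j < 0 then - x (- g j) else x (g j)) else 0)"
    proof (rule sum.cong[OF refl])
      fix i assume i: "i \<in> {1..int m}"
      have e: "(\<bar>inv g i\<bar> = j) = (i = \<bar>g j\<bar>)" using abs_inv_eq[OF a i, of j] 3 by simp
      show "x i * phiB m g i j = (if i = \<bar>g j\<bar> then (if g j < 0 then - x (- g j) else x (g j)) else 0)"
      proof (cases "i = \<bar>g j\<bar>")
        case True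
        then have "inv g i = (if g j < 0 then - j else j)" using sp_inv_abs[OF a, of j] by simp
        then show ?thesis using True 3 phiB_pos[OF i a] by (auto simp: lb_def)
      next
        case False
        then show ?thesis using e 3 phiB_pos[OF i a] by (auto simp: lb_def)
      qed
    qed
    also have "\<dots> = (if g j < 0 then - x (- g j) else x (g j))" using gj by (simp add: sum.delta)
    finally show ?thesis using 3 by (simp add: Phi_split m1 lb_def negset_def)
  next
    case 4
    have "(\<Sum>i\<in>{1..int m}. x i * phiB m g i j) = 0"
    proof (rule sum.neutral, intro ballI)
      fix i assume i: "i \<in> {1..int m}"
      show "x i * phiB m g i j = 0" using phiB_pos[OF i a] rng[OF i] 4 by (auto simp: lb_def)
    qed
    moreover have "j \<noteq> -1" "j \<noteq> 0" "\<not>(1 \<le> j \<and> j \<le> int m)" "j \<notin> negset m g" using 4 by (auto simp: negset_def)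
    ultimately show ?thesis by (auto simp: Phi_split m1 lb_def)
  qed
qed

definition tU :: "int set \<Rightarrow> (int \<Rightarrow> int) \<Rightarrow> int" where
  "tU U f = (\<Sum>j\<in>U. if f j < 0 then 1 else 0)"

definition invar :: "(int \<Rightarrow> int) \<Rightarrow> int set \<Rightarrow> bool" where
  "invar f U \<longleftrightarrow> (\<forall>j\<in>U. \<bar>f j\<bar> \<in> U)"

lemma tcount_tU: "int (tcount m f) = tU {1..int m} f"
proof -
  have "int (tcount m f) = (\<Sum>j\<in>negset m f. 1)" by (simp add: tcount_def)
  also have "\<dots> = (\<Sum>j\<in>{j\<in>{1..int m}. f j < 0}. 1)" by (simp only: negset_def)
  also have "\<dots> = tU {1..int m} f" unfolding tU_def by (rule sum.inter_filter) simp
  finally show ?thesis .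
qed

lemma abs_img:
  assumes a: "signed_perm m f" and U: "U \<subseteq> {1..int m}" and iv: "invar f U"
  shows "inj_on (\<lambda>j. \<bar>f j\<bar>) U" "(\<lambda>j. \<bar>f j\<bar>) ` U = U"
proof -
  show inj: "inj_on (\<lambda>j. \<bar>f j\<bar>) U"
  proof (rule inj_onI)
    fix x y assume x: "x \<in> U" and y: "y \<in> U" and e: "\<bar>f x\<bar> = \<bar>f y\<bar>"
    then have "f x = f y \<or> f x = - f y" by auto
    then have "f x = f y \<or> f x = f (- y)" using sp_odd[OF a, of y] by simp
    then have "x = y \<or> x = - y" using sp_inj[OF a] by blast
    moreover have "x \<ge> 1" "y \<ge> 1" using x y U by auto
    ultimately show "x = y" by auto
  qed
  have fin: "finite U" using U finite_subset by blast
  have sub: "(\<lambda>j. \<bar>f j\<bar>) ` U \<subseteq> U" using iv by (auto simp: invar_def)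
  have "card ((\<lambda>j. \<bar>f j\<bar>) ` U) = card U" using card_image[OF inj] .
  then show "(\<lambda>j. \<bar>f j\<bar>) ` U = U" using card_subset_eq[OF fin sub] by simp
qed

lemma reindex_abs:
  assumes a: "signed_perm m f" and U: "U \<subseteq> {1..int m}" and iv: "invar f U"
  shows "(\<Sum>i\<in>U. F i) = (\<Sum>j\<in>U. F \<bar>f j\<bar>)"
proof -
  have "(\<Sum>i\<in>U. F i) = (\<Sum>i\<in>(\<lambda>j. \<bar>f j\<bar>) ` U. F i)" using abs_img(2)[OF a U iv] by simp
  also have "\<dots> = (\<Sum>j\<in>U. F \<bar>f j\<bar>)" using sum.reindex[OF abs_img(1)[OF a U iv]] by simp
  finally show ?thesis .
qed

lemma invar_inv:
  assumes a: "signed_perm m f" and U: "U \<subseteq> {1..int m}" and iv: "invar f U"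
  shows "invar (inv f) U"
  unfolding invar_def
proof
  fix i assume i: "i \<in> U"
  then obtain j where j: "j \<in> U" "i = \<bar>f j\<bar>" using abs_img(2)[OF a U iv] by blast
  then have "inv f i = (if f j < 0 then - j else j)" using sp_inv_abs[OF a] by simp
  then show "\<bar>inv f i\<bar> \<in> U" using j U by auto
qed

lemma invar_full: "signed_perm m f \<Longrightarrow> invar f {1..int m}"
  unfolding invar_def using sp_range by blast

lemma tU_inv:
  assumes a: "signed_perm m g" and U: "U \<subseteq> {1..int m}" and iv: "invar g U"
  shows "tU U (inv g) = tU U g"
proof -
  have "tU U (inv g) = (\<Sum>j\<in>U. if inv g \<bar>g j\<bar> < 0 then 1 else 0)"
    unfolding tU_def by (rule reindex_abs[OF a U iv])
  also have "\<dots> = tU U g" unfolding tU_def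
  proof (rule sum.cong[OF refl])
    fix j assume j: "j \<in> U"
    show "(if inv g \<bar>g j\<bar> < 0 then 1 else 0) = (if g j < 0 then 1 else (0::int))"
      using sp_inv_abs[OF a, of j] j U by auto
  qed
  finally show ?thesis .
qed


lemma T1:
  assumes a: "signed_perm m g" and b: "signed_perm m h" and U: "U \<subseteq> {1..int m}" and iv: "invar g U"
  shows "tU U (h \<circ> g) = tU U h + tU U g - 2 * (\<Sum>i\<in>U. if inv g i < 0 \<and> h i < 0 then 1 else 0)"
proof -
  define F where "F i = (if (if inv g i < 0 then - h i else h i) < 0 then 1 else (0::int))" for i
  have "tU U (h \<circ> g) = (\<Sum>j\<in>U. F \<bar>g j\<bar>)" unfolding tU_def
  proof (rule sum.cong[OF refl])
    fix j assume j: "j \<in> U"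
    have j1: "j \<ge> 1" using j U by auto
    show "(if (h \<circ> g) j < 0 then 1 else 0) = F \<bar>g j\<bar>"
    proof (cases "g j < 0")
      case True
      have e1: "inv g \<bar>g j\<bar> = - j" using sp_inv_abs[OF a, of j] True by simp
      have "h (g j) = h (- \<bar>g j\<bar>)" using True by simp
      also have "\<dots> = - h \<bar>g j\<bar>" by (rule sp_odd[OF b])
      finally have e2: "(h \<circ> g) j = - h \<bar>g j\<bar>" by simp
      show ?thesis unfolding F_def e1 e2 using j1 by simp
    next
      case False
      have e1: "inv g \<bar>g j\<bar> = j" using sp_inv_abs[OF a, of j] False by simp
      have e2: "(h \<circ> g) j = h \<bar>g j\<bar>" using False by simp
      show ?thesis unfolding F_def e1 e2 using j1 by simp
    qed
  qed
  also have "\<dots> = (\<Sum>i\<in>U. F i)" by (rule reindex_abs[OF a U iv, symmetric])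
  also have "\<dots> = (\<Sum>i\<in>U. (if h i < 0 then 1 else 0) + (if inv g i < 0 then 1 else 0) - 2 * (if inv g i < 0 \<and> h i < 0 then 1 else 0))"
  proof (rule sum.cong[OF refl])
    fix i assume i: "i \<in> U"
    then have "h i \<noteq> 0" using sp_range[OF b, of i] U by auto
    then show "F i = (if h i < 0 then 1 else 0) + (if inv g i < 0 then 1 else 0) - 2 * (if inv g i < 0 \<and> h i < 0 then 1 else 0)"
      unfolding F_def by (cases "inv g i < 0"; cases "h i < 0") simp_all
  qed
  also have "\<dots> = tU U h + tU U (inv g) - 2 * (\<Sum>i\<in>U. if inv g i < 0 \<and> h i < 0 then 1 else 0)"
    by (simp add: tU_def sum.distrib sum_subtractf sum_distrib_left)
  finally show ?thesis using tU_inv[OF a U iv] by simp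
qed

lemma Phi_lin: "Phi m g (\<lambda>j. a * x j + b * y j) j = a * Phi m g x j + b * Phi m g y j"
  by (simp add: Phi_def algebra_simps sum.distrib sum_distrib_left)

lemma T2:
  fixes x :: "int \<Rightarrow> int"
  assumes a: "signed_perm m g" and b: "signed_perm m h"
  shows "(\<Sum>k\<in>{1..int m}. if inv (h \<circ> g) k < 0 then x k else 0) =
    (\<Sum>k\<in>{1..int m}. if inv h k < 0 then x k else 0) +
    (\<Sum>i\<in>{1..int m}. if inv g i < 0 then (if h i < 0 then - x (- h i) else x (h i)) else 0)"
proof -
  have io: "inv (h \<circ> g) = inv g \<circ> inv h" using o_inv_distrib[OF sp_bij[OF b] sp_bij[OF a]] .
  have "(\<Sum>k\<in>{1..int m}. if inv (h \<circ> g) k < 0 then x k else 0) + (\<Sum>k\<in>{1..int m}. 0) =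
     (\<Sum>i\<in>{1..int m}. if inv (h \<circ> g) \<bar>h i\<bar> < 0 then x \<bar>h i\<bar> else 0)"
    using reindex_abs[OF b order_refl invar_full[OF b]] by simp
  also have "\<dots> = (\<Sum>i\<in>{1..int m}. (if inv h \<bar>h i\<bar> < 0 then x \<bar>h i\<bar> else 0) +
       (if inv g i < 0 then (if h i < 0 then - x (- h i) else x (h i)) else 0))"
  proof (rule sum.cong[OF refl])
    fix i assume i: "i \<in> {1..int m}"
    have hi: "h i \<noteq> 0" using sp_range[OF b i] by simp
    have gi: "inv g i \<noteq> 0" using sp_range[OF sp_inv[OF a] i] by simp
    have e: "inv h \<bar>h i\<bar> = (if h i < 0 then - i else i)" by (rule sp_inv_abs[OF b])
    have og: "inv g (- i) = - inv g i" by (rule sp_odd[OF sp_inv[OF a]])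
    show "(if inv (h \<circ> g) \<bar>h i\<bar> < 0 then x \<bar>h i\<bar> else 0) = (if inv h \<bar>h i\<bar> < 0 then x \<bar>h i\<bar> else 0) +
       (if inv g i < 0 then (if h i < 0 then - x (- h i) else x (h i)) else 0)"
    proof (cases "h i < 0")
      case True
      then have "inv (h \<circ> g) \<bar>h i\<bar> = - inv g i" unfolding io using e og by simp
      then show ?thesis using True i gi e by auto
    next
      case False
      then have "inv (h \<circ> g) \<bar>h i\<bar> = inv g i" unfolding io using e by simp
      then show ?thesis using False i hi gi e by auto
    qed
  qed
  also have "\<dots> = (\<Sum>i\<in>{1..int m}. if inv h \<bar>h i\<bar> < 0 then x \<bar>h i\<bar> else 0) +
       (\<Sum>i\<in>{1..int m}. if inv g i < 0 then (if h i < 0 then - x (- h i) else x (h i)) else 0)"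
    by (rule sum.distrib)
  also have "(\<Sum>i\<in>{1..int m}. if inv h \<bar>h i\<bar> < 0 then x \<bar>h i\<bar> else 0) = (\<Sum>k\<in>{1..int m}. if inv h k < 0 then x k else 0)"
    using reindex_abs[OF b order_refl invar_full[OF b], of "\<lambda>k. if inv h k < 0 then x k else 0", symmetric] by simp
  finally show ?thesis by (simp add: comp_def)
qed

lemma tdiv:
  assumes a: "signed_perm m g" and b: "signed_perm m h" and eg: "even (tcount m g)" and eh: "even (tcount m h)"
  shows "int (tcount m (h \<circ> g) div 2) = int (tcount m h div 2) + int (tcount m g div 2) -
     (\<Sum>i\<in>{1..int m}. if inv g i < 0 \<and> h i < 0 then 1 else 0)"
proof -
  have t1: "tU {1..int m} (h \<circ> g) = tU {1..int m} h + tU {1..int m} g - 2 * (\<Sum>i\<in>{1..int m}. if inv g i < 0 \<and> h i < 0 then 1 else 0)"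
    by (rule T1[OF a b order_refl invar_full[OF a]])
  have z: "\<And>f. int (tcount m f div 2) = tU {1..int m} f div 2" using tcount_tU by (metis zdiv_int of_nat_numeral)
  have "even (tU {1..int m} g)" "even (tU {1..int m} h)" using eg eh tcount_tU by (metis even_of_nat)+
  then show ?thesis unfolding z t1 by (auto elim!: evenE)
qed

lemma PhiC_out: "signed_perm m g \<Longrightarrow> j \<notin> {-1..int m} \<Longrightarrow> Phi m g x j = 0"
  by (subst PhiC) auto

lemma PhiHom:
  assumes a: "signed_perm m g" and b: "signed_perm m h" and eg: "even (tcount m g)" and eh: "even (tcount m h)"
  shows "Phi m (h \<circ> g) x = Phi m g (Phi m h x)"
proof
  fix j
  have c: "signed_perm m (h \<circ> g)" by (rule sp_comp[OF b a])
  consider "j = -1" | "j = 0" | "1 \<le> j \<and> j \<le> int m" | "j \<noteq> -1 \<and> j \<noteq> 0 \<and> \<not> (1 \<le> j \<and> j \<le> int m)" by linarith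
  then show "Phi m (h \<circ> g) x j = Phi m g (Phi m h x) j"
  proof cases
    case 1
    then show ?thesis by (simp add: PhiC[OF a] PhiC[OF b] PhiC[OF c])
  next
    case 2
    have L: "Phi m (h \<circ> g) x j = x 0 + x (-1) * int (tcount m (h \<circ> g) div 2) + (\<Sum>k\<in>{1..int m}. if inv (h \<circ> g) k < 0 then x k else 0)"
      using 2 by (simp add: PhiC[OF c])
    have s: "(\<Sum>i\<in>{1..int m}. if inv g i < 0 then Phi m h x i else 0) =
       (\<Sum>i\<in>{1..int m}. if inv g i < 0 then (if h i < 0 then - x (- h i) else x (h i)) else 0)
       - x (-1) * (\<Sum>i\<in>{1..int m}. if inv g i < 0 \<and> h i < 0 then 1 else 0)"
    proof -
      have "(\<Sum>i\<in>{1..int m}. if inv g i < 0 then Phi m h x i else 0) =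
         (\<Sum>i\<in>{1..int m}. (if inv g i < 0 then (if h i < 0 then - x (- h i) else x (h i)) else 0)
           - x (-1) * (if inv g i < 0 \<and> h i < 0 then 1 else 0))"
        by (rule sum.cong[OF refl]) (auto simp: PhiC[OF b])
      then show ?thesis by (simp add: sum_subtractf sum_distrib_left)
    qed
    have R: "Phi m g (Phi m h x) j = Phi m h x 0 + Phi m h x (-1) * int (tcount m g div 2) +
       (\<Sum>i\<in>{1..int m}. if inv g i < 0 then Phi m h x i else 0)"
      using 2 by (simp add: PhiC[OF a])
    show ?thesis unfolding L R s T2[OF a b] tdiv[OF a b eg eh]
      by (simp add: PhiC[OF b] algebra_simps)
  next
    case 3
    have gj: "\<bar>g j\<bar> \<in> {1..int m}" "g j \<noteq> 0" using sp_range[OF a, of j] 3 by auto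
    show ?thesis
    proof (cases "g j < 0")
      case True
      have e: "h (g j) = - h (- g j)" using sp_odd[OF b, of "- g j"] by simp
      have r: "1 \<le> - g j \<and> - g j \<le> int m" using gj True by auto
      have hn: "h (- g j) \<noteq> 0" using sp_range[OF b, of "- g j"] r by auto
      show ?thesis using 3 True r e hn by (simp add: PhiC[OF a] PhiC[OF b] PhiC[OF c])
    next
      case False
      have r: "1 \<le> g j \<and> g j \<le> int m" using gj False by auto
      show ?thesis using 3 False r by (simp add: PhiC[OF a] PhiC[OF b] PhiC[OF c])
    qed
  next
    case 4
    then have "j \<notin> {-1..int m}" by auto
    then show ?thesis by (simp add: PhiC_out[OF a] PhiC_out[OF c])
  qed
qed

definition flipp :: "(int \<Rightarrow> int) set \<Rightarrow> int \<Rightarrow> bool" where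
  "flipp H j \<longleftrightarrow> (\<exists>s\<in>H. s j = - j)"

definition Crit :: "nat \<Rightarrow> (int \<Rightarrow> int) set \<Rightarrow> bool" where
  "Crit m H \<longleftrightarrow> (\<forall>U. U \<subseteq> {1..int m} \<and> (\<forall>h\<in>H. invar h U) \<and> (\<forall>h\<in>H. even (tU U h)) \<longrightarrow>
     (\<forall>j\<in>U. \<not> flipp H j) \<or> (\<forall>j\<in>{1..int m} - U. \<not> flipp H j))"

lemma sub_sp: "sp_subgroup m H \<Longrightarrow> h \<in> H \<Longrightarrow> signed_perm m h"
  by (auto simp: sp_subgroup_def WB_def)

lemma sub_id: "sp_subgroup m H \<Longrightarrow> id \<in> H" by (simp add: sp_subgroup_def)
lemma sub_comp: "sp_subgroup m H \<Longrightarrow> f \<in> H \<Longrightarrow> g \<in> H \<Longrightarrow> f \<circ> g \<in> H" by (simp add: sp_subgroup_def)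
lemma sub_inv: "sp_subgroup m H \<Longrightarrow> f \<in> H \<Longrightarrow> inv f \<in> H" by (simp add: sp_subgroup_def)
lemma sub_fin: "sp_subgroup m H \<Longrightarrow> finite H"
  using WB_fin finite_subset by (auto simp: sp_subgroup_def)

lemma WD_even: "h \<in> WD m \<Longrightarrow> even (tcount m h)"
  by (auto simp: WD_def sgn_char_def minus_one_power_iff split: if_splits)

lemma WD_even_tU: "h \<in> WD m \<Longrightarrow> even (tU {1..int m} h)"
  using WD_even tcount_tU by (metis even_of_nat)

lemma avg:
  fixes \<phi> :: "(int \<Rightarrow> int) \<Rightarrow> int"
  assumes fin: "finite K" and cl: "\<And>f g. f \<in> K \<Longrightarrow> g \<in> K \<Longrightarrow> f \<circ> g \<in> K"
    and iv: "\<And>f. f \<in> K \<Longrightarrow> inv f \<in> K" and bj: "\<And>f. f \<in> K \<Longrightarrow> bij f"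
    and hom: "\<And>f g. f \<in> K \<Longrightarrow> g \<in> K \<Longrightarrow> \<phi> (f \<circ> g) = \<phi> g + \<phi> f" and h: "h \<in> K"
  shows "\<phi> h = 0"
proof -
  have bh: "bij h" using bj h by blast
  have ih: "inv h \<circ> h = id" using bh by (simp add: bij_is_inj inv_o_cancel)
  have hi: "h \<circ> inv h = id" using surj_iff[of h] bij_is_surj[OF bh] by simp
  have bb: "bij_betw (\<lambda>g. h \<circ> g) K K"
  proof (rule bij_betw_imageI)
    show "inj_on (\<lambda>g. h \<circ> g) K"
    proof (rule inj_onI)
      fix x y assume "h \<circ> x = h \<circ> y"
      then have "inv h \<circ> (h \<circ> x) = inv h \<circ> (h \<circ> y)" by simp
      then have "(inv h \<circ> h) \<circ> x = (inv h \<circ> h) \<circ> y" by (simp add: comp_assoc)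
      then show "x = y" by (simp add: ih)
    qed
    show "(\<lambda>g. h \<circ> g) ` K = K"
    proof
      show "(\<lambda>g. h \<circ> g) ` K \<subseteq> K" using cl h by blast
      show "K \<subseteq> (\<lambda>g. h \<circ> g) ` K"
      proof
        fix k assume k: "k \<in> K"
        have "k = h \<circ> (inv h \<circ> k)" by (simp add: o_assoc hi)
        moreover have "inv h \<circ> k \<in> K" using cl iv h k by blast
        ultimately show "k \<in> (\<lambda>g. h \<circ> g) ` K" by blast
      qed
    qed
  qed
  have "(\<Sum>g\<in>K. \<phi> (h \<circ> g)) = (\<Sum>g\<in>K. \<phi> g)"
    using sum.reindex_bij_betw[OF bb, of \<phi>] by simp
  moreover have "(\<Sum>g\<in>K. \<phi> (h \<circ> g)) = (\<Sum>g\<in>K. \<phi> g) + of_nat (card K) * \<phi> h"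
    using hom h by (simp add: sum.distrib)
  ultimately have "of_nat (card K) * \<phi> h = 0" by simp
  moreover have "card K > 0" using fin h card_gt_0_iff by blast
  ultimately show ?thesis by simp
qed

lemma avg_sub:
  fixes \<phi> :: "(int \<Rightarrow> int) \<Rightarrow> int"
  assumes H: "sp_subgroup m H" and hom: "\<And>f g. f \<in> H \<Longrightarrow> g \<in> H \<Longrightarrow> \<phi> (f \<circ> g) = \<phi> g + \<phi> f" and h: "h \<in> H"
  shows "\<phi> h = 0"
  by (rule avg[OF sub_fin[OF H] sub_comp[OF H] sub_inv[OF H] sp_bij[OF sub_sp[OF H]] hom h])

lemma avg_stab:
  fixes \<phi> :: "(int \<Rightarrow> int) \<Rightarrow> int"
  assumes H: "sp_subgroup m H" and hom: "\<And>f g. f \<in> H \<Longrightarrow> g \<in> H \<Longrightarrow> f r = r \<Longrightarrow> g r = r \<Longrightarrow> \<phi> (f \<circ> g) = \<phi> g + \<phi> f"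
    and h: "h \<in> H" and hr: "h r = r"
  shows "\<phi> h = 0"
proof (rule avg[where K = "{w\<in>H. w r = r}" and \<phi> = \<phi>])
  show "finite {w\<in>H. w r = r}" using sub_fin[OF H] by simp
  show "\<And>f g. f \<in> {w\<in>H. w r = r} \<Longrightarrow> g \<in> {w\<in>H. w r = r} \<Longrightarrow> f \<circ> g \<in> {w\<in>H. w r = r}"
    using sub_comp[OF H] by auto
  show "\<And>f. f \<in> {w\<in>H. w r = r} \<Longrightarrow> inv f \<in> {w\<in>H. w r = r}"
  proof -
    fix f assume f: "f \<in> {w\<in>H. w r = r}"
    then have "inv f (f r) = r" using sp_inv_f[OF sub_sp[OF H]] by blast
    then show "inv f \<in> {w\<in>H. w r = r}" using f sub_inv[OF H] by auto
  qed
  show "\<And>f. f \<in> {w\<in>H. w r = r} \<Longrightarrow> bij f" using sp_bij[OF sub_sp[OF H]] by blast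
  show "\<And>f g. f \<in> {w\<in>H. w r = r} \<Longrightarrow> g \<in> {w\<in>H. w r = r} \<Longrightarrow> \<phi> (f \<circ> g) = \<phi> g + \<phi> f"
    using hom by blast
  show "h \<in> {w\<in>H. w r = r}" using h hr by blast
qed

lemma sp_sgn: "signed_perm m f \<Longrightarrow> s = 1 \<or> s = -1 \<Longrightarrow> f (s * x) = s * f x"
  using sp_odd[of m f x] by auto

lemma inv_eq: "signed_perm m f \<Longrightarrow> f x = y \<Longrightarrow> inv f y = x"
  using sp_inv_f by blast

definition orb :: "(int \<Rightarrow> int) set \<Rightarrow> int \<Rightarrow> int set" where
  "orb H i = {\<bar>h i\<bar> | h. h \<in> H}"

definition rep :: "(int \<Rightarrow> int) set \<Rightarrow> int \<Rightarrow> int" where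
  "rep H i = (SOME r. r \<in> orb H i)"

definition gsel :: "(int \<Rightarrow> int) set \<Rightarrow> int \<Rightarrow> int \<Rightarrow> int" where
  "gsel H i = (SOME g. g \<in> H \<and> \<bar>g (rep H i)\<bar> = i)"

lemma abs_app: "signed_perm m k \<Longrightarrow> \<bar>k \<bar>x\<bar>\<bar> = \<bar>k x\<bar>"
proof (cases "x < 0")
  case True
  assume a: "signed_perm m k"
  have "k \<bar>x\<bar> = k (- x)" using True by simp
  also have "\<dots> = - k x" by (rule sp_odd[OF a])
  finally show ?thesis by simp
qed simp

lemma orb_mem: "sp_subgroup m H \<Longrightarrow> i \<ge> 0 \<Longrightarrow> i \<in> orb H i"
  unfolding orb_def using sub_id[of m H] by force

lemma orb_move:
  assumes H: "sp_subgroup m H" and h: "h \<in> H"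
  shows "orb H \<bar>h i\<bar> = orb H i"
proof
  show "orb H \<bar>h i\<bar> \<subseteq> orb H i"
  proof
    fix y assume "y \<in> orb H \<bar>h i\<bar>"
    then obtain k where k: "k \<in> H" "y = \<bar>k \<bar>h i\<bar>\<bar>" by (auto simp: orb_def)
    then have "y = \<bar>(k \<circ> h) i\<bar>" using abs_app[OF sub_sp[OF H k(1)]] by simp
    moreover have "k \<circ> h \<in> H" using sub_comp[OF H k(1) h] .
    ultimately show "y \<in> orb H i" unfolding orb_def by blast
  qed
  show "orb H i \<subseteq> orb H \<bar>h i\<bar>"
  proof
    fix y assume "y \<in> orb H i"
    then obtain k where k: "k \<in> H" "y = \<bar>k i\<bar>" by (auto simp: orb_def)
    have kh: "k \<circ> inv h \<in> H" using sub_comp[OF H k(1) sub_inv[OF H h]] .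
    have "(k \<circ> inv h) (h i) = k i" using sp_inv_f[OF sub_sp[OF H h]] by simp
    then have "y = \<bar>(k \<circ> inv h) \<bar>h i\<bar>\<bar>" using k abs_app[OF sub_sp[OF H kh]] by simp
    then show "y \<in> orb H \<bar>h i\<bar>" using kh unfolding orb_def by blast
  qed
qed

lemma rep_orb: "sp_subgroup m H \<Longrightarrow> i \<ge> 0 \<Longrightarrow> rep H i \<in> orb H i"
  unfolding rep_def using orb_mem by (metis someI)

lemma rep_move: "sp_subgroup m H \<Longrightarrow> h \<in> H \<Longrightarrow> rep H \<bar>h i\<bar> = rep H i"
  unfolding rep_def using orb_move by metis

lemma rep_range: assumes H: "sp_subgroup m H" and i: "i \<in> {1..int m}" shows "rep H i \<in> {1..int m}"
proof -
  obtain h where h: "h \<in> H" "rep H i = \<bar>h i\<bar>" using rep_orb[OF H, of i] i by (auto simp: orb_def)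
  then show ?thesis using sp_range[OF sub_sp[OF H h(1)] i] by simp
qed

lemma gsel_prop: assumes H: "sp_subgroup m H" and i: "i \<in> {1..int m}"
  shows "gsel H i \<in> H \<and> \<bar>gsel H i (rep H i)\<bar> = i"
proof -
  obtain h where h: "h \<in> H" "rep H i = \<bar>h i\<bar>" using rep_orb[OF H, of i] i by (auto simp: orb_def)
  have "inv h (rep H i) = (if h i < 0 then - i else i)" using h sp_inv_abs[OF sub_sp[OF H h(1)]] by simp
  then have "inv h \<in> H \<and> \<bar>inv h (rep H i)\<bar> = i" using sub_inv[OF H h(1)] i by auto
  then show ?thesis unfolding gsel_def by (rule someI[where P = "\<lambda>g. g \<in> H \<and> \<bar>g (rep H i)\<bar> = i"])
qed

lemma neg_abs: "signed_perm m w \<Longrightarrow> w x = - x \<Longrightarrow> w \<bar>x\<bar> = - \<bar>x\<bar>"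
  by (cases "x < 0") (auto simp: sp_odd)

lemma flip_move1:
  assumes H: "sp_subgroup m H" and h: "h \<in> H" and f: "flipp H i"
  shows "flipp H \<bar>h i\<bar>"
proof -
  obtain s where s: "s \<in> H" "s i = - i" using f by (auto simp: flipp_def)
  define w where "w = h \<circ> s \<circ> inv h"
  have wH: "w \<in> H" unfolding w_def using sub_comp[OF H sub_comp[OF H h s(1)] sub_inv[OF H h]] .
  have "w (h i) = h (s i)" unfolding w_def using sp_inv_f[OF sub_sp[OF H h]] by simp
  also have "\<dots> = - h i" using s(2) sp_odd[OF sub_sp[OF H h]] by simp
  finally have "w \<bar>h i\<bar> = - \<bar>h i\<bar>" using neg_abs[OF sub_sp[OF H wH]] by blast
  then show ?thesis using wH by (auto simp: flipp_def)
qed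

lemma flip_move:
  assumes H: "sp_subgroup m H" and h: "h \<in> H" and i: "i \<ge> 0"
  shows "flipp H \<bar>h i\<bar> = flipp H i"
proof
  assume "flipp H \<bar>h i\<bar>"
  then have "flipp H \<bar>inv h \<bar>h i\<bar>\<bar>" using flip_move1[OF H sub_inv[OF H h]] by blast
  moreover have "\<bar>inv h \<bar>h i\<bar>\<bar> = i" using sp_inv_abs[OF sub_sp[OF H h], of i] i by simp
  ultimately show "flipp H i" by simp
qed (rule flip_move1[OF H h])

lemma flip_rep: assumes H: "sp_subgroup m H" and i: "i \<in> {1..int m}" shows "flipp H (rep H i) = flipp H i"
proof -
  obtain h where h: "h \<in> H" "rep H i = \<bar>h i\<bar>" using rep_orb[OF H, of i] i by (auto simp: orb_def)
  then show ?thesis using flip_move[OF H h(1)] i by simp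
qed

lemma sgn_cases: "(x::int) \<noteq> 0 \<Longrightarrow> sgn x = 1 \<or> sgn x = -1"
  by (auto simp: sgn_if)

lemma nonflip_w:
  assumes H: "sp_subgroup m H" and i: "i \<in> {1..int m}" and nf: "\<not> flipp H i" and h: "h \<in> H"
  defines "k \<equiv> \<bar>h i\<bar>"
  defines "r \<equiv> rep H i"
  defines "w \<equiv> inv (gsel H k) \<circ> (h \<circ> gsel H i)"
  shows "rep H k = r" "w \<in> H" "w r = r" "h \<circ> gsel H i = gsel H k \<circ> w"
    "sgn (gsel H k r) = sgn (gsel H i r) * sgn (h i)"
proof -
  show rk: "rep H k = r" unfolding k_def r_def by (rule rep_move[OF H h])
  have k: "k \<in> {1..int m}" unfolding k_def using sp_range[OF sub_sp[OF H h] i] by simp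
  obtain gi where gi: "gi = gsel H i" by simp
  obtain gk where gk: "gk = gsel H k" by simp
  have gip: "gi \<in> H" "\<bar>gi r\<bar> = i" using gsel_prop[OF H i] gi r_def by auto
  have gkp: "gk \<in> H" "\<bar>gk r\<bar> = k" using gsel_prop[OF H k] gk rk by auto
  have spi: "signed_perm m gi" "signed_perm m gk" "signed_perm m h" using gip gkp h sub_sp[OF H] by auto
  have nz: "gi r \<noteq> 0" "gk r \<noteq> 0" "h i \<noteq> 0" using gip gkp i k sp_range[OF spi(3) i] by auto
  obtain si sk sh where ss: "si = sgn (gi r)" "sk = sgn (gk r)" "sh = sgn (h i)" by simp
  have s1: "si = 1 \<or> si = -1" "sk = 1 \<or> sk = -1" "sh = 1 \<or> sh = -1"
    using nz sgn_cases ss by auto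
  have d1: "gi r = si * i" using gip(2) ss by (metis mult_sgn_abs)
  have d2: "gk r = sk * k" using gkp(2) ss by (metis mult_sgn_abs)
  have d3: "h i = sh * k" unfolding k_def using ss by (metis mult_sgn_abs)
  have ur: "(h \<circ> gi) r = si * sh * k"
  proof -
    have "(h \<circ> gi) r = h (si * i)" using d1 by simp
    also have "\<dots> = si * h i" by (rule sp_sgn[OF spi(3) s1(1)])
    finally show ?thesis using d3 by simp
  qed
  have ik: "inv gk k = sk * r"
  proof (rule inv_eq[OF spi(2)])
    have "gk (sk * r) = sk * gk r" by (rule sp_sgn[OF spi(2) s1(2)])
    also have "\<dots> = k" using d2 s1(2) by auto
    finally show "gk (sk * r) = k" .
  qed
  define e where "e = si * sh * sk"
  have e1: "e = 1 \<or> e = -1" unfolding e_def using s1 by auto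
  have wr: "w r = e * r"
  proof -
    have "w r = inv gk (si * sh * k)" unfolding w_def using ur gi gk by simp
    also have "\<dots> = (si * sh) * inv gk k"
      by (rule sp_sgn[OF sp_inv[OF spi(2)]]) (use s1 in auto)
    finally show ?thesis using ik by (simp add: e_def algebra_simps)
  qed
  show wH: "w \<in> H" unfolding w_def using sub_comp[OF H sub_inv[OF H gkp(1)] sub_comp[OF H h gip(1)]] gi gk by simp
  have "\<not> flipp H r" using flip_rep[OF H i] nf r_def by simp
  then have "e \<noteq> -1" using wr wH by (auto simp: flipp_def)
  then have e: "e = 1" using e1 by simp
  then show "w r = r" using wr by simp
  show "sgn (gsel H k r) = sgn (gsel H i r) * sgn (h i)"
    using e s1 gi gk ss unfolding e_def by auto
  have "gk \<circ> w = (gk \<circ> inv gk) \<circ> (h \<circ> gi)" unfolding w_def gi gk by (simp add: comp_assoc)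
  also have "gk \<circ> inv gk = id" using surj_iff[of gk] bij_is_surj[OF sp_bij[OF spi(2)]] by simp
  finally have "gk \<circ> w = h \<circ> gi" by (simp add: comp_def)
  then show "h \<circ> gsel H i = gsel H k \<circ> w" using gi gk by simp
qed

lemma split_even:
  assumes H: "sp_subgroup m H" and W: "W \<subseteq> {1..int m}" and iv: "\<forall>h\<in>H. invar h W"
    and nf: "\<forall>j\<in>W. \<not> flipp H j" and h: "h \<in> H"
  shows "even (tU W h)"
proof -
  define e where "e x = (if sgn (gsel H x (rep H x)) < 0 then 1 else (0::int))" for x
  have sp: "signed_perm m h" using sub_sp[OF H h] .
  have pt: "(if h i < 0 then 1 else 0) = e i + e \<bar>h i\<bar> - 2 * (e i * e \<bar>h i\<bar>)" if i: "i \<in> W" for i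
  proof -
    have i': "i \<in> {1..int m}" using i W by auto
    have k': "\<bar>h i\<bar> \<in> {1..int m}" using sp_range[OF sp i'] by simp
    have rel: "sgn (gsel H \<bar>h i\<bar> (rep H \<bar>h i\<bar>)) = sgn (gsel H i (rep H i)) * sgn (h i)"
      using nonflip_w(1,5)[OF H i' _ h] nf i by simp
    have n1: "gsel H i (rep H i) \<noteq> 0" using gsel_prop[OF H i'] i' by auto
    have n2: "h i \<noteq> 0" using sp_range[OF sp i'] by simp
    show ?thesis unfolding e_def rel using n1 n2
      by (cases "gsel H i (rep H i) < 0"; cases "h i < 0") (auto simp: sgn_if)
  qed
  have "tU W h = (\<Sum>i\<in>W. e i + e \<bar>h i\<bar> - 2 * (e i * e \<bar>h i\<bar>))"
    unfolding tU_def using pt by (rule sum.cong[OF refl])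
  also have "\<dots> = (\<Sum>i\<in>W. e i) + (\<Sum>i\<in>W. e \<bar>h i\<bar>) - 2 * (\<Sum>i\<in>W. e i * e \<bar>h i\<bar>)"
    by (simp add: sum.distrib sum_subtractf sum_distrib_left)
  also have "(\<Sum>i\<in>W. e \<bar>h i\<bar>) = (\<Sum>i\<in>W. e i)"
    using reindex_abs[OF sp W, of e] iv h by simp
  finally show ?thesis by simp
qed

lemma sum_U_restrict:
  assumes U: "U \<subseteq> {1..int m}"
  shows "(\<Sum>i\<in>{1..int m}. if i \<in> U then f i else 0) = (\<Sum>i\<in>U. f i)"
proof -
  have "(\<Sum>i\<in>{1..int m}. if i \<in> U then f i else 0) = (\<Sum>i\<in>{i\<in>{1..int m}. i \<in> U}. f i)"
    by (rule sum.inter_filter[symmetric]) simp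
  also have "{i\<in>{1..int m}. i \<in> U} = U" using U by auto
  finally show ?thesis .
qed

lemma invar_back:
  assumes a: "signed_perm m g" and U: "U \<subseteq> {1..int m}" and iv: "invar g U" and j: "j \<in> {1..int m}"
  shows "(\<bar>g j\<bar> \<in> U) = (j \<in> U)"
proof
  assume "\<bar>g j\<bar> \<in> U"
  then have "\<bar>inv g \<bar>g j\<bar>\<bar> \<in> U" using invar_inv[OF a U iv] by (auto simp: invar_def)
  moreover have "\<bar>inv g \<bar>g j\<bar>\<bar> = j" using sp_inv_abs[OF a, of j] j by simp
  ultimately show "j \<in> U" by simp
next
  assume "j \<in> U" then show "\<bar>g j\<bar> \<in> U" using iv by (auto simp: invar_def)
qed

lemma H1_Crit:
  assumes H: "sp_subgroup m H" and HD: "H \<subseteq> WD m" and V: "H1_vanishes m H"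
  shows "Crit m H"
  unfolding Crit_def
proof (intro allI impI)
  fix U assume UU: "U \<subseteq> {1..int m} \<and> (\<forall>h\<in>H. invar h U) \<and> (\<forall>h\<in>H. even (tU U h))"
  then have U: "U \<subseteq> {1..int m}" and iv: "\<And>h. h \<in> H \<Longrightarrow> invar h U" and ev: "\<And>h. h \<in> H \<Longrightarrow> even (tU U h)" by auto
  show "(\<forall>j\<in>U. \<not> flipp H j) \<or> (\<forall>j\<in>{1..int m} - U. \<not> flipp H j)"
  proof (rule ccontr)
    assume "\<not> ((\<forall>j\<in>U. \<not> flipp H j) \<or> (\<forall>j\<in>{1..int m} - U. \<not> flipp H j))"
    then obtain j1 j2 where j1: "j1 \<in> U" "flipp H j1" and j2: "j2 \<in> {1..int m} - U" "flipp H j2" by auto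
    define c where "c h = (\<lambda>j. if j = 0 then tU U h div 2 else if j \<in> U then (if h j < 0 then -1 else 0) else (0::int))"
      for h :: "int \<Rightarrow> int"
    have lat: "\<forall>g\<in>H. c g \<in> lattice m" using U by (auto simp: lattice_def c_def)
    have cm1: "c h (-1) = 0" for h using U by (auto simp: c_def)
    have c0: "c h 0 = tU U h div 2" for h by (simp add: c_def)
    have coc: "\<forall>g\<in>H. \<forall>h\<in>H. c (h \<circ> g) = (\<lambda>j. c g j + Phi m g (c h) j)"
    proof (intro ballI ext)
      fix g h j assume g: "g \<in> H" and h: "h \<in> H"
      have sg: "signed_perm m g" and sh: "signed_perm m h" using g h sub_sp[OF H] by auto
      consider "j = -1" | "j = 0" | "1 \<le> j \<and> j \<le> int m" | "j \<notin> {-1..int m}" by fastforce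
      then show "c (h \<circ> g) j = c g j + Phi m g (c h) j"
      proof cases
        case 1
        then show ?thesis using U by (auto simp: PhiC[OF sg] c_def)
      next
        case 2
        have s: "(\<Sum>i\<in>{1..int m}. if inv g i < 0 then c h i else 0) = - (\<Sum>i\<in>U. if inv g i < 0 \<and> h i < 0 then 1 else 0)"
        proof -
          have "(\<Sum>i\<in>{1..int m}. if inv g i < 0 then c h i else 0) = (\<Sum>i\<in>{1..int m}. if i \<in> U then - (if inv g i < 0 \<and> h i < 0 then 1 else 0) else 0)"
            by (rule sum.cong[OF refl]) (auto simp: c_def)
          also have "\<dots> = (\<Sum>i\<in>U. - (if inv g i < 0 \<and> h i < 0 then 1 else 0))" by (rule sum_U_restrict[OF U])
          finally show ?thesis by (simp add: sum_negf)
        qed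
        have t1: "tU U (h \<circ> g) = tU U h + tU U g - 2 * (\<Sum>i\<in>U. if inv g i < 0 \<and> h i < 0 then 1 else 0)"
          by (rule T1[OF sg sh U iv[OF g]])
        have "c (h \<circ> g) j = tU U (h \<circ> g) div 2" using 2 by (simp add: c_def)
        moreover have "c g j + Phi m g (c h) j = tU U g div 2 + (tU U h div 2 - (\<Sum>i\<in>U. if inv g i < 0 \<and> h i < 0 then 1 else 0))"
          using 2 s by (simp add: PhiC[OF sg] cm1 c0)
        ultimately show ?thesis using t1 ev[OF g] ev[OF h] by (auto elim!: evenE)
      next
        case 3
        have jr: "j \<in> {1..int m}" using 3 by simp
        have gj: "\<bar>g j\<bar> \<in> {1..int m}" "g j \<noteq> 0" using sp_range[OF sg jr] by auto
        have eqU: "(\<bar>g j\<bar> \<in> U) = (j \<in> U)" by (rule invar_back[OF sg U iv[OF g] jr])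
        show ?thesis
        proof (cases "g j < 0")
          case True
          have e: "h (g j) = - h (- g j)" using sp_odd[OF sh, of "- g j"] by simp
          have hn: "h (- g j) \<noteq> 0" using sp_range[OF sh, of "- g j"] gj True by auto
          have "- g j \<in> U \<longleftrightarrow> j \<in> U" using eqU True by simp
          then show ?thesis using 3 True e hn U by (auto simp: PhiC[OF sg] c_def cm1)
        next
          case False
          have "g j \<in> U \<longleftrightarrow> j \<in> U" using eqU False by simp
          then show ?thesis using 3 False gj U by (auto simp: PhiC[OF sg] c_def cm1)
        qed
      next
        case 4
        then show ?thesis using U by (auto simp: PhiC_out[OF sg] c_def)
      qed
    qed
    obtain a where a: "\<forall>g\<in>H. c g = (\<lambda>j. Phi m g a j - a j)"
      using V lat coc unfolding H1_vanishes_def by blast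
    obtain s1 where s1: "s1 \<in> H" "s1 j1 = - j1" using j1 by (auto simp: flipp_def)
    obtain s2 where s2: "s2 \<in> H" "s2 j2 = - j2" using j2 by (auto simp: flipp_def)
    have r1: "j1 \<ge> 1" "j1 \<le> int m" using j1 U by auto
    have r2: "j2 \<ge> 1" "j2 \<le> int m" using j2 by auto
    have "c s1 j1 = Phi m s1 a j1 - a j1" using a s1 by metis
    then have e1: "-1 = - a (-1) - 2 * a j1" using r1 s1 j1 by (simp add: PhiC[OF sub_sp[OF H s1(1)]] c_def)
    have "c s2 j2 = Phi m s2 a j2 - a j2" using a s2 by metis
    then have e2: "0 = - a (-1) - 2 * a j2" using r2 s2 j2 by (simp add: PhiC[OF sub_sp[OF H s2(1)]] c_def)
    define u where "u = a (-1)"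
    have f1: "u = 1 - 2 * a j1" using e1 unfolding u_def by linarith
    have f2: "u = - 2 * a j2" using e2 unfolding u_def by linarith
    from f1 f2 have "1 = 2 * a j1 - 2 * a j2" by linarith
    then show False by presburger
  qed
qed

lemma PhiC0: "signed_perm m g \<Longrightarrow> Phi m g y 0 = y 0 + y (-1) * int (tcount m g div 2) + (\<Sum>i\<in>{1..int m}. if inv g i < 0 then y i else 0)"
  by (simp add: PhiC)

lemma PhiCm1: "signed_perm m g \<Longrightarrow> Phi m g y (-1) = y (-1)"
  by (simp add: PhiC)

lemma PhiCj: "signed_perm m g \<Longrightarrow> 1 \<le> j \<Longrightarrow> j \<le> int m \<Longrightarrow> Phi m g y j = (if g j < 0 then - y (-1) - y (- g j) else y (g j))"
  by (simp add: PhiC)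

lemma sgn_abs_mul: "sgn (x::int) * \<bar>x\<bar> = x" by (simp add: mult_sgn_abs)

lemma Crit_H1:
  assumes H: "sp_subgroup m H" and HD: "H \<subseteq> WD m" and CR: "Crit m H"
  shows "H1_vanishes m H"
  unfolding H1_vanishes_def
proof (intro allI impI)
  fix c :: "(int \<Rightarrow> int) \<Rightarrow> int \<Rightarrow> int"
  assume "(\<forall>g\<in>H. c g \<in> lattice m) \<and> (\<forall>g\<in>H. \<forall>h\<in>H. c (h \<circ> g) = (\<lambda>j. c g j + Phi m g (c h) j))"
  then have lat: "\<And>g. g \<in> H \<Longrightarrow> c g \<in> lattice m"
    and cc: "\<And>g h. g \<in> H \<Longrightarrow> h \<in> H \<Longrightarrow> c (h \<circ> g) = (\<lambda>j. c g j + Phi m g (c h) j)" by auto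
  have sp: "\<And>h. h \<in> H \<Longrightarrow> signed_perm m h" using sub_sp[OF H] by blast
  have ccj: "\<And>g h j. g \<in> H \<Longrightarrow> h \<in> H \<Longrightarrow> c (h \<circ> g) j = c g j + Phi m g (c h) j"
    using cc by metis
  have cm1: "c h (-1) = 0" if h: "h \<in> H" for h
  proof (rule avg_sub[OF H _ h, of "\<lambda>f. c f (-1)"])
    fix f g assume f: "f \<in> H" and g: "g \<in> H"
    show "c (f \<circ> g) (-1) = c g (-1) + c f (-1)" using ccj[OF g f, of "-1"] PhiCm1[OF sp[OF g]] by simp
  qed
  have cout: "c h j = 0" if "h \<in> H" "j \<notin> {-1..int m}" for h j
    using lat[OF that(1)] that(2) by (auto simp: lattice_def)
  have CI: "c (h \<circ> g) i = c g i + (if g i < 0 then - c h (- g i) else c h (g i))"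
    if g: "g \<in> H" and h: "h \<in> H" and i: "i \<in> {1..int m}" for g h i
    using ccj[OF g h, of i] PhiCj[OF sp[OF g], of i "c h"] i cm1[OF h] by simp
  have stab: "c w r = 0" if w: "w \<in> H" and r: "r \<in> {1..int m}" and wr: "w r = r" for w r
  proof (rule avg_stab[OF H _ w wr, of "\<lambda>f. c f r"])
    fix f g assume f: "f \<in> H" and g: "g \<in> H" and fr: "f r = r" and gr: "g r = r"
    show "c (f \<circ> g) r = c g r + c f r" using CI[OF g f r] gr r by simp
  qed
  define sfl where "sfl i = (SOME s. s \<in> H \<and> s i = - i)" for i
  have sflp: "sfl i \<in> H \<and> sfl i i = - i" if "flipp H i" for i
    using that unfolding sfl_def flipp_def by (metis (mono_tags, lifting) someI_ex)
  define Bv where "Bv A i = (if flipp H i then - c (sfl i) i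
      else sgn (gsel H i (rep H i)) * (2 * c (gsel H i) (rep H i) + A))" for A i
  have P1: "2 * c h i = sgn (h i) * Bv A \<bar>h i\<bar> - Bv A i" if h: "h \<in> H" and i: "i \<in> {1..int m}" for A h i
  proof -
    define k where "k = \<bar>h i\<bar>"
    have k: "k \<in> {1..int m}" unfolding k_def using sp_range[OF sp[OF h] i] by simp
    have hik: "h i = sgn (h i) * k" unfolding k_def by (simp add: sgn_abs_mul)
    have hnz: "h i \<noteq> 0" using sp_range[OF sp[OF h] i] by simp
    have sh: "sgn (h i) = 1 \<or> sgn (h i) = -1" using sgn_cases[OF hnz] .
    have fk: "flipp H k = flipp H i" unfolding k_def using flip_move[OF H h] i by simp
    show ?thesis
    proof (cases "flipp H i")
      case True
      then have fk': "flipp H k" using fk by simp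
      define si where "si = sfl i"
      define sk where "sk = sfl k"
      have si: "si \<in> H" "si i = - i" using sflp[OF True] unfolding si_def by auto
      have sk: "sk \<in> H" "sk k = - k" using sflp[OF fk'] unfolding sk_def by auto
      have Bi: "Bv A i = - c si i" using True unfolding Bv_def si_def by simp
      have Bk: "Bv A k = - c sk k" using fk' unfolding Bv_def sk_def by simp
      define v1 where "v1 = h \<circ> si"
      define v2 where "v2 = sk \<circ> h"
      have v1H: "v1 \<in> H" unfolding v1_def by (rule sub_comp[OF H h si(1)])
      have v2H: "v2 \<in> H" unfolding v2_def by (rule sub_comp[OF H sk(1) h])
      define w where "w = inv v2 \<circ> v1"
      have wH: "w \<in> H" unfolding w_def by (rule sub_comp[OF H sub_inv[OF H v2H] v1H])
      have v1i: "v1 i = - h i" unfolding v1_def using si(2) sp_odd[OF sp[OF h], of i] by simp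
      have v2i: "v2 i = - h i"
      proof -
        have "v2 i = sk (sgn (h i) * k)" unfolding v2_def using hik by simp
        also have "\<dots> = sgn (h i) * sk k" by (rule sp_sgn[OF sp[OF sk(1)] sh])
        finally show ?thesis using sk(2) hik by simp
      qed
      have wi: "w i = i" unfolding w_def using v1i v2i sp_inv_f[OF sp[OF v2H], of i] by simp
      have v21: "v2 \<circ> w = v1"
      proof -
        have "v2 \<circ> w = (v2 \<circ> inv v2) \<circ> v1" unfolding w_def by (simp add: comp_assoc)
        also have "v2 \<circ> inv v2 = id" using surj_iff[of v2] bij_is_surj[OF sp_bij[OF sp[OF v2H]]] by simp
        finally show ?thesis by (simp add: comp_def)
      qed
      have e1: "c v1 i = c v2 i"
      proof -
        have "c v1 i = c (v2 \<circ> w) i" using v21 by simp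
        also have "\<dots> = c w i + c v2 i" using CI[OF wH v2H i] wi i by simp
        finally show ?thesis using stab[OF wH i wi] by simp
      qed
      have e2: "c v1 i = c si i - c h i" unfolding v1_def using CI[OF si(1) h i] si(2) i by simp
      have e3: "c v2 i = c h i + sgn (h i) * c sk k"
      proof (cases "h i < 0")
        case True
        then have "- h i = k" unfolding k_def by simp
        then show ?thesis unfolding v2_def using CI[OF h sk(1) i] True by simp
      next
        case False
        then have "h i = k" unfolding k_def by simp
        then show ?thesis unfolding v2_def using CI[OF h sk(1) i] False hnz by (simp add: sgn_if)
      qed
      show ?thesis using e1 e2 e3 Bi Bk unfolding k_def by (simp add: algebra_simps)
    next
      case False
      then have nfk: "\<not> flipp H k" using fk by simp
      define r where "r = rep H i"
      have r: "r \<in> {1..int m}" unfolding r_def by (rule rep_range[OF H i])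
      have nw: "rep H k = r" "inv (gsel H k) \<circ> (h \<circ> gsel H i) \<in> H"
        "(inv (gsel H k) \<circ> (h \<circ> gsel H i)) r = r"
        "h \<circ> gsel H i = gsel H k \<circ> (inv (gsel H k) \<circ> (h \<circ> gsel H i))"
        "sgn (gsel H k r) = sgn (gsel H i r) * sgn (h i)"
        using nonflip_w[OF H i False h] unfolding k_def r_def by auto
      define w where "w = inv (gsel H k) \<circ> (h \<circ> gsel H i)"
      define gi where "gi = gsel H i"
      define gk where "gk = gsel H k"
      have gip: "gi \<in> H" "\<bar>gi r\<bar> = i" using gsel_prop[OF H i] unfolding gi_def r_def by auto
      have gkp: "gk \<in> H" using gsel_prop[OF H k] unfolding gk_def by auto
      have Bi: "Bv A i = sgn (gi r) * (2 * c gi r + A)" using False unfolding Bv_def gi_def r_def by simp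
      have Bk: "Bv A k = sgn (gk r) * (2 * c gk r + A)" using nfk nw(1) unfolding Bv_def gk_def by simp
      have gnz: "gi r \<noteq> 0" using gip i by auto
      have sgi: "sgn (gi r) = 1 \<or> sgn (gi r) = -1" using sgn_cases[OF gnz] .
      have e1: "c (h \<circ> gi) r = c gi r + sgn (gi r) * c h i"
      proof (cases "gi r < 0")
        case True
        then have "- gi r = i" using gip by simp
        then show ?thesis using CI[OF gip(1) h r] True by simp
      next
        case False
        then have "gi r = i" using gip by simp
        then show ?thesis using CI[OF gip(1) h r] False gnz by (simp add: sgn_if)
      qed
      have e2: "c (gk \<circ> w) r = c gk r"
        using CI[OF nw(2) gkp r] nw(3) r stab[OF nw(2) r nw(3)] unfolding w_def by simp
      have e3: "h \<circ> gi = gk \<circ> w" using nw(4) unfolding w_def gi_def gk_def by simp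
      have cr: "c gk r = c gi r + sgn (gi r) * c h i" using e1 e2 e3 by simp
      have sk: "sgn (gk r) = sgn (gi r) * sgn (h i)" using nw(5) unfolding gi_def gk_def by simp
      show ?thesis unfolding k_def[symmetric] Bi Bk sk cr using sh sgi
        by (auto simp: algebra_simps)
    qed
  qed
  have P2: "even (Bv A i - A)" if i: "i \<in> {1..int m}" and nf: "\<not> flipp H i" for A i
  proof -
    have gnz: "gsel H i (rep H i) \<noteq> 0" using gsel_prop[OF H i] i by auto
    have "Bv A i = sgn (gsel H i (rep H i)) * (2 * c (gsel H i) (rep H i) + A)" using nf by (simp add: Bv_def)
    then show ?thesis using sgn_cases[OF gnz] by auto
  qed
  have Bflip: "Bv A i = Bv A' i" if "flipp H i" for A A' i using that by (simp add: Bv_def)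
  define D where "D A = (\<lambda>j. if j = -1 then 2 * A else if 1 \<le> j \<and> j \<le> int m then Bv A j - A else 0)" for A
  have EE: "Phi m h (D A) j - D A j = 2 * c h j" if h: "h \<in> H" and j0: "j \<noteq> 0" for A h j
  proof -
    consider "j = -1" | "1 \<le> j \<and> j \<le> int m" | "j \<notin> {-1..int m}" using j0 by fastforce
    then show ?thesis
    proof cases
      case 1
      then show ?thesis using PhiCm1[OF sp[OF h]] cm1[OF h] by simp
    next
      case 2
      then have jr: "j \<in> {1..int m}" by simp
      have k: "\<bar>h j\<bar> \<in> {1..int m}" "h j \<noteq> 0" using sp_range[OF sp[OF h] jr] by auto
      have p: "2 * c h j = sgn (h j) * Bv A \<bar>h j\<bar> - Bv A j" by (rule P1[OF h jr])
      show ?thesis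
      proof (cases "h j < 0")
        case True
        then have "1 \<le> - h j \<and> - h j \<le> int m" using k by auto
        then show ?thesis using True 2 p PhiCj[OF sp[OF h], of j "D A"] by (simp add: D_def)
      next
        case False
        then have "1 \<le> h j \<and> h j \<le> int m" using k by auto
        then show ?thesis using False 2 p k PhiCj[OF sp[OF h], of j "D A"] by (simp add: D_def sgn_if)
      qed
    next
      case 3
      have "D A j = 0" using 3 by (auto simp: D_def)
      then show ?thesis using PhiC_out[OF sp[OF h] 3] cout[OF h 3] by simp
    qed
  qed
  have E0: "Phi m h (D A) 0 - D A 0 = 2 * c h 0" if h: "h \<in> H" for A h
  proof -
    have "2 * c h 0 - (Phi m h (D A) 0 - D A 0) = 0"
    proof (rule avg_sub[OF H _ h, of "\<lambda>f. 2 * c f 0 - (Phi m f (D A) 0 - D A 0)"])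
      fix f g assume f: "f \<in> H" and g: "g \<in> H"
      define T where "T = int (tcount m g div 2)"
      define S1 where "S1 = (\<Sum>i\<in>{1..int m}. if inv g i < 0 then D A i else 0)"
      define S2 where "S2 = (\<Sum>i\<in>{1..int m}. if inv g i < 0 then c f i else 0)"
      have s3: "(\<Sum>i\<in>{1..int m}. if inv g i < 0 then Phi m f (D A) i else 0) = S1 + 2 * S2"
      proof -
        have "(\<Sum>i\<in>{1..int m}. if inv g i < 0 then Phi m f (D A) i else 0) =
              (\<Sum>i\<in>{1..int m}. (if inv g i < 0 then D A i else 0) + 2 * (if inv g i < 0 then c f i else 0))"
        proof (rule sum.cong[OF refl])
          fix i assume i: "i \<in> {1..int m}"
          then have "Phi m f (D A) i = D A i + 2 * c f i" using EE[OF f, of i A] by simp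
          then show "(if inv g i < 0 then Phi m f (D A) i else 0) = (if inv g i < 0 then D A i else 0) + 2 * (if inv g i < 0 then c f i else 0)"
            by simp
        qed
        then show ?thesis unfolding S1_def S2_def by (simp add: sum.distrib sum_distrib_left)
      qed
      have hom: "Phi m (f \<circ> g) (D A) = Phi m g (Phi m f (D A))"
        by (rule PhiHom[OF sp[OF g] sp[OF f] WD_even WD_even]) (use HD f g in auto)
      have a1: "Phi m g (Phi m f (D A)) 0 = Phi m f (D A) 0 + 2 * A * T + S1 + 2 * S2"
        using PhiC0[OF sp[OF g], of "Phi m f (D A)"] PhiCm1[OF sp[OF f], of "D A"] s3
        unfolding T_def by (simp add: D_def)
      have a2: "Phi m g (D A) 0 = D A 0 + 2 * A * T + S1"
        using PhiC0[OF sp[OF g], of "D A"] unfolding T_def S1_def by (simp add: D_def)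
      have a3: "c (f \<circ> g) 0 = c g 0 + c f 0 + S2"
        using ccj[OF g f, of 0] PhiC0[OF sp[OF g], of "c f"] cm1[OF f] unfolding S2_def by simp
      show "2 * c (f \<circ> g) 0 - (Phi m (f \<circ> g) (D A) 0 - D A 0) =
            (2 * c g 0 - (Phi m g (D A) 0 - D A 0)) + (2 * c f 0 - (Phi m f (D A) 0 - D A 0))"
        unfolding hom a1 a2 a3 by (simp add: algebra_simps)
    qed
    then show ?thesis by simp
  qed
  have Eall: "Phi m h (D A) j - D A j = 2 * c h j" if h: "h \<in> H" for A h j
    using EE[OF h] E0[OF h] by (cases "j = 0") auto
  have fin: "\<exists>a\<in>lattice m. \<forall>g\<in>H. c g = (\<lambda>j. Phi m g a j - a j)"
    if ev: "\<forall>i\<in>{1..int m}. even (Bv A i - A)" for A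
  proof -
    define a where "a j = D A j div 2" for j
    have Da: "D A j = 2 * a j" for j
    proof -
      have "even (D A j)" using ev by (auto simp: D_def)
      then show ?thesis unfolding a_def by simp
    qed
    have aL: "a \<in> lattice m" unfolding lattice_def a_def D_def by auto
    have "c g = (\<lambda>j. Phi m g a j - a j)" if g: "g \<in> H" for g
    proof
      fix j
      have "Phi m g (D A) j = 2 * Phi m g a j"
      proof -
        have "D A = (\<lambda>j. 2 * a j + 0 * a j)" using Da by auto
        then show ?thesis using Phi_lin[of m g 2 a 0 a j] by simp
      qed
      then have "2 * (Phi m g a j - a j) = 2 * c g j" using Eall[OF g, of A j] Da[of j] by simp
      then show "c g j = Phi m g a j - a j" by simp
    qed
    then show ?thesis using aL by blast
  qed
  define U0 where "U0 = {i\<in>{1..int m}. odd (Bv 0 i)}"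
  have U0s: "U0 \<subseteq> {1..int m}" unfolding U0_def by auto
  have U0iv: "invar h U0" if h: "h \<in> H" for h
    unfolding invar_def
  proof
    fix i assume i: "i \<in> U0"
    then have ir: "i \<in> {1..int m}" and oi: "odd (Bv 0 i)" unfolding U0_def by auto
    have k: "\<bar>h i\<bar> \<in> {1..int m}" "h i \<noteq> 0" using sp_range[OF sp[OF h] ir] by auto
    have p: "2 * c h i = sgn (h i) * Bv 0 \<bar>h i\<bar> - Bv 0 i" by (rule P1[OF h ir])
    have "odd (sgn (h i) * Bv 0 \<bar>h i\<bar>)"
    proof -
      have "sgn (h i) * Bv 0 \<bar>h i\<bar> = 2 * c h i + Bv 0 i" using p by simp
      then show ?thesis using oi by simp
    qed
    then have "odd (Bv 0 \<bar>h i\<bar>)" by simp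
    then show "\<bar>h i\<bar> \<in> U0" using k unfolding U0_def by simp
  qed
  have U0ev: "even (tU U0 h)" if h: "h \<in> H" for h
  proof -
    have ih: "inv h \<in> H" by (rule sub_inv[OF H h])
    have iih: "inv (inv h) = h" by (rule inv_inv_eq[OF sp_bij[OF sp[OF h]]])
    have "Phi m (inv h) (D 0) 0 - D 0 0 = 2 * c (inv h) 0" by (rule E0[OF ih])
    then have "(\<Sum>i\<in>{1..int m}. if h i < 0 then D 0 i else 0) = 2 * c (inv h) 0"
      using PhiC0[OF sp[OF ih], of "D 0"] iih by (simp add: D_def)
    moreover have "(\<Sum>i\<in>{1..int m}. if h i < 0 then D 0 i else 0) = (\<Sum>i\<in>{1..int m}. if h i < 0 then Bv 0 i else 0)"
      by (rule sum.cong[OF refl]) (auto simp: D_def)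
    ultimately have "even (\<Sum>i\<in>{1..int m}. if h i < 0 then Bv 0 i else 0)" by simp
    then have "even (card {i\<in>{1..int m}. odd (if h i < 0 then Bv 0 i else 0)})" by (simp add: even_sum_iff)
    moreover have "{i\<in>{1..int m}. odd (if h i < 0 then Bv 0 i else 0)} = {i\<in>U0. odd (if h i < 0 then 1 else 0::int)}"
      unfolding U0_def by auto
    moreover have "finite U0" using U0s finite_subset by blast
    ultimately show ?thesis unfolding tU_def by (simp add: even_sum_iff)
  qed
  have cr: "(\<forall>j\<in>U0. \<not> flipp H j) \<or> (\<forall>j\<in>{1..int m} - U0. \<not> flipp H j)"
    using CR U0s U0iv U0ev unfolding Crit_def by blast
  then show "\<exists>a\<in>lattice m. \<forall>g\<in>H. c g = (\<lambda>j. Phi m g a j - a j)"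
  proof
    assume a: "\<forall>j\<in>U0. \<not> flipp H j"
    show ?thesis
    proof (rule fin[of 0], intro ballI)
      fix i assume i: "i \<in> {1..int m}"
      show "even (Bv 0 i - 0)"
      proof (cases "flipp H i")
        case True
        then have "i \<notin> U0" using a by blast
        then show ?thesis using i unfolding U0_def by simp
      next
        case False
        then show ?thesis using P2[OF i] by blast
      qed
    qed
  next
    assume a: "\<forall>j\<in>{1..int m} - U0. \<not> flipp H j"
    show ?thesis
    proof (rule fin[of 1], intro ballI)
      fix i assume i: "i \<in> {1..int m}"
      show "even (Bv 1 i - 1)"
      proof (cases "flipp H i")
        case True
        then have "i \<in> U0" using a i by blast
        then have "odd (Bv 0 i)" unfolding U0_def by simp
        then show ?thesis using Bflip[OF True, of 1 0] by simp
      next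
        case False
        then show ?thesis using P2[OF i] by blast
      qed
    qed
  qed
qed

definition flipN :: "nat \<Rightarrow> int \<Rightarrow> int" where
  "flipN n' = (\<lambda>x. if \<bar>x\<bar> = int n' + 1 then - x else x)"

lemma flipN_sp: "signed_perm (n' + 1) (flipN n')"
proof -
  have e: "flipN n' = transpose (int n' + 1) (- (int n' + 1))"
    by (auto simp: flipN_def transpose_def fun_eq_iff)
  have "flipN n' permutes ({- int (n' + 1)..int (n' + 1)} - {0})"
    unfolding e by (rule permutes_swap_id) auto
  moreover have "flipN n' (- x) = - flipN n' x" for x by (auto simp: flipN_def)
  ultimately show ?thesis by (simp add: signed_perm_def)
qed

lemma flipN_flipN: "flipN n' \<circ> flipN n' = id"
  by (auto simp: flipN_def fun_eq_iff)

lemma sp_mono: "signed_perm m f \<Longrightarrow> m \<le> m' \<Longrightarrow> signed_perm m' f"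
  unfolding signed_perm_def
  by (auto intro: permutes_superset)

lemma tU_union: "finite A \<Longrightarrow> finite B \<Longrightarrow> A \<inter> B = {} \<Longrightarrow> tU (A \<union> B) f = tU A f + tU B f"
  unfolding tU_def by (rule sum.union_disjoint)

context
  fixes n n' :: nat and G :: "(int \<Rightarrow> int) set"
  assumes Gs: "sp_subgroup n G" and GD: "G \<subseteq> WD n" and nn: "n' \<le> n"
    and Oinv: "\<forall>g\<in>G. invar g {1..int n'}"
begin

lemma spG: "g \<in> G \<Longrightarrow> signed_perm n g" using sub_sp[OF Gs] .

lemma Osub: "{1..int n'} \<subseteq> {1..int n}" using nn by auto

lemma absO: "g \<in> G \<Longrightarrow> (\<bar>g x\<bar> \<in> {1..int n'}) = (\<bar>x\<bar> \<in> {1..int n'})"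
proof -
  assume g: "g \<in> G"
  have "\<bar>g x\<bar> = \<bar>g \<bar>x\<bar>\<bar>" using abs_app[OF spG[OF g]] by simp
  moreover have "(\<bar>g \<bar>x\<bar>\<bar> \<in> {1..int n'}) = (\<bar>x\<bar> \<in> {1..int n'})" if "\<bar>x\<bar> \<in> {1..int n}"
    using invar_back[OF spG[OF g] Osub _ that] Oinv g by auto
  moreover have "\<bar>x\<bar> \<notin> {1..int n} \<Longrightarrow> g x = x"
  proof -
    assume "\<bar>x\<bar> \<notin> {1..int n}"
    then have "x \<notin> SS n" by (auto simp: SS_def)
    then show "g x = x" by (rule sp_out[OF spG[OF g]])
  qed
  ultimately show ?thesis using Osub by (cases "\<bar>x\<bar> \<in> {1..int n}") auto
qed

lemma gO_app: "g \<in> G \<Longrightarrow> gO n' g x = (if \<bar>x\<bar> \<in> {1..int n'} then g x else x)"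
  by (simp add: gO_def)

lemma gO_comp: assumes f: "f \<in> G" and g: "g \<in> G" shows "gO n' (f \<circ> g) = gO n' f \<circ> gO n' g"
proof
  fix x
  show "gO n' (f \<circ> g) x = (gO n' f \<circ> gO n' g) x"
  proof (cases "\<bar>x\<bar> \<in> {1..int n'}")
    case True
    then have "\<bar>g x\<bar> \<in> {1..int n'}" using absO[OF g] by simp
    then show ?thesis using True unfolding gO_def comp_def by presburger
  next
    case False
    then show ?thesis unfolding gO_def comp_def by presburger
  qed
qed

lemma gO_id: "gO n' id = id" by (auto simp: gO_def fun_eq_iff)

lemma gO_sp: assumes g: "g \<in> G" shows "signed_perm n' (gO n' g)"
proof -
  have ig: "inv g \<in> G" by (rule sub_inv[OF Gs g])
  have S: "x \<in> SS n' \<longleftrightarrow> \<bar>x\<bar> \<in> {1..int n'}" for x by (auto simp: SS_def)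
  have "bij_betw (gO n' g) (SS n') (SS n')"
  proof (rule bij_betw_byWitness[where f' = "gO n' (inv g)"])
    show "\<forall>a\<in>SS n'. gO n' (inv g) (gO n' g a) = a"
      using absO[OF g] sp_inv_f[OF spG[OF g]] by (auto simp: gO_def S)
    show "\<forall>a\<in>SS n'. gO n' g (gO n' (inv g) a) = a"
      using absO[OF ig] sp_f_inv[OF spG[OF g]] by (auto simp: gO_def S)
    show "gO n' g ` SS n' \<subseteq> SS n'" using absO[OF g] by (auto simp: gO_def S)
    show "gO n' (inv g) ` SS n' \<subseteq> SS n'" using absO[OF ig] by (auto simp: gO_def S)
  qed
  moreover have "x \<notin> SS n' \<Longrightarrow> gO n' g x = x" for x by (auto simp: gO_def S)
  ultimately have "gO n' g permutes SS n'" by (rule bij_imp_permutes)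
  moreover have "gO n' g (- x) = - gO n' g x" for x using sp_odd[OF spG[OF g]] by (simp add: gO_def)
  ultimately show ?thesis by (simp add: signed_perm_def SS_def)
qed

lemma tcount_gO: "g \<in> G \<Longrightarrow> int (tcount n' (gO n' g)) = tU {1..int n'} g"
  unfolding tcount_tU tU_def by (rule sum.cong) (auto simp: gO_def)

lemma sgnO: "g \<in> G \<Longrightarrow> sgn_char n' (gO n' g) = (if even (tU {1..int n'} g) then 1 else -1)"
proof -
  assume g: "g \<in> G"
  have "even (tcount n' (gO n' g)) = even (tU {1..int n'} g)" using tcount_gO[OF g] by (metis even_of_nat)
  then show ?thesis by (simp add: sgn_char_def minus_one_power_iff)
qed

lemma PO_eq: assumes g: "g \<in> G" shows "PO n' g = (if even (tU {1..int n'} g) then gO n' g else gO n' g \<circ> flipN n')"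
proof (cases "even (tU {1..int n'} g)")
  case True
  then show ?thesis unfolding PO_def sgnO[OF g] by simp
next
  case False
  have "(\<lambda>x. if \<bar>x\<bar> = int n' + 1 then - x else gO n' g x) = gO n' g \<circ> flipN n'"
  proof
    fix x show "(if \<bar>x\<bar> = int n' + 1 then - x else gO n' g x) = (gO n' g \<circ> flipN n') x"
      by (cases "\<bar>x\<bar> = int n' + 1") (auto simp: gO_def flipN_def)
  qed
  then show ?thesis unfolding PO_def sgnO[OF g] using False by simp
qed

lemma gO_flip: assumes g: "g \<in> G" shows "gO n' g \<circ> flipN n' = flipN n' \<circ> gO n' g"
proof
  fix x
  show "(gO n' g \<circ> flipN n') x = (flipN n' \<circ> gO n' g) x"
  proof (cases "\<bar>x\<bar> \<in> {1..int n'}")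
    case True
    then have a: "\<bar>g x\<bar> \<in> {1..int n'}" using absO[OF g] by simp
    have "\<bar>x\<bar> \<noteq> int n' + 1" "\<bar>g x\<bar> \<noteq> int n' + 1" using True a by auto
    then show ?thesis using True unfolding gO_def flipN_def comp_def by simp
  next
    case False
    then show ?thesis unfolding gO_def flipN_def comp_def by auto
  qed
qed

lemma tUO_comp: "f \<in> G \<Longrightarrow> g \<in> G \<Longrightarrow> even (tU {1..int n'} (f \<circ> g)) = (even (tU {1..int n'} f) = even (tU {1..int n'} g))"
proof -
  assume f: "f \<in> G" and g: "g \<in> G"
  have "tU {1..int n'} (f \<circ> g) = tU {1..int n'} f + tU {1..int n'} g - 2 * (\<Sum>i\<in>{1..int n'}. if inv g i < 0 \<and> f i < 0 then 1 else 0)"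
    by (rule T1[OF spG[OF g] spG[OF f] Osub]) (use Oinv g in auto)
  then show ?thesis by simp
qed

lemma PO_hom: "f \<in> G \<Longrightarrow> g \<in> G \<Longrightarrow> PO n' (f \<circ> g) = PO n' f \<circ> PO n' g"
proof -
  assume f: "f \<in> G" and g: "g \<in> G"
  have fg: "f \<circ> g \<in> G" by (rule sub_comp[OF Gs f g])
  have c: "gO n' (f \<circ> g) = gO n' f \<circ> gO n' g" by (rule gO_comp[OF f g])
  have ff: "flipN n' \<circ> flipN n' = id" by (rule flipN_flipN)
  show ?thesis
    unfolding PO_eq[OF fg] PO_eq[OF f] PO_eq[OF g] tUO_comp[OF f g] c
    using gO_flip[OF g] ff
    by (auto simp: comp_assoc) (metis comp_assoc comp_id)
qed

lemma PO_id: "PO n' id = id"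
proof -
  have "id \<in> G" by (rule sub_id[OF Gs])
  moreover have "tU {1..int n'} id = 0" by (simp add: tU_def)
  ultimately show ?thesis using PO_eq gO_id by simp
qed

lemma PO_sp1: "g \<in> G \<Longrightarrow> signed_perm (n' + 1) (PO n' g)"
proof -
  assume g: "g \<in> G"
  have a: "signed_perm (n' + 1) (gO n' g)" by (rule sp_mono[OF gO_sp[OF g]]) simp
  show ?thesis unfolding PO_eq[OF g] using sp_comp[OF a flipN_sp] a by simp
qed

lemma PO_sp0: "g \<in> G \<Longrightarrow> even (tU {1..int n'} g) \<Longrightarrow> signed_perm n' (PO n' g)"
  using PO_eq gO_sp by simp

lemma PO_O: "g \<in> G \<Longrightarrow> i \<in> {1..int n'} \<Longrightarrow> PO n' g i = g i"
  by (auto simp: PO_def gO_def)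

lemma PO_N: assumes g: "g \<in> G"
  shows "PO n' g (int n' + 1) = (if even (tU {1..int n'} g) then int n' + 1 else - (int n' + 1))"
  unfolding PO_eq[OF g] by (simp add: gO_def flipN_def)

lemma PO_inv: assumes f: "f \<in> G" shows "PO n' (inv f) = inv (PO n' f)"
proof -
  have if': "inv f \<in> G" by (rule sub_inv[OF Gs f])
  have "PO n' f \<circ> PO n' (inv f) = PO n' (f \<circ> inv f)" by (rule PO_hom[OF f if', symmetric])
  also have "f \<circ> inv f = id" using surj_iff[of f] bij_is_surj[OF sp_bij[OF spG[OF f]]] by simp
  finally have e: "PO n' f \<circ> PO n' (inv f) = id" using PO_id by metis
  have b: "bij (PO n' f)" by (rule sp_bij[OF PO_sp1[OF f]])
  have "inv (PO n' f) = inv (PO n' f) \<circ> (PO n' f \<circ> PO n' (inv f))" using e by simp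
  also have "\<dots> = (inv (PO n' f) \<circ> PO n' f) \<circ> PO n' (inv f)" by (simp add: comp_assoc)
  also have "inv (PO n' f) \<circ> PO n' f = id" using b by (simp add: bij_is_inj inv_o_cancel)
  finally show ?thesis by simp
qed

lemma tU_PO_O: "g \<in> G \<Longrightarrow> U \<subseteq> {1..int n'} \<Longrightarrow> tU U (PO n' g) = tU U g"
  unfolding tU_def by (rule sum.cong) (auto simp: PO_O)

end

lemma Kvec_val: "Kvec m j = (if j = -1 then -2 else if j = 0 then -2 else if 1 \<le> j \<and> j \<le> int m then 1 else 0)"
  by (simp add: Kvec_def lb_eq sum.delta)

lemma RM:
  assumes m: "m \<ge> 1" and HD: "H \<subseteq> WD m" and fl: "\<forall>j\<in>{1..int m}. \<exists>h\<in>H. h j = - j"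
  shows "rel_minimal m H"
  unfolding rel_minimal_def
proof
  have sp: "\<And>h. h \<in> H \<Longrightarrow> signed_perm m h" using HD by (auto simp: WD_def WB_def)
  show "{x \<in> lattice m. \<forall>g\<in>H. Phi m g x = x} \<subseteq> {\<lambda>j. a * lb 0 j + b * Kvec m j |a b. True}"
  proof
    fix x assume "x \<in> {x \<in> lattice m. \<forall>g\<in>H. Phi m g x = x}"
    then have xl: "x \<in> lattice m" and inv: "\<And>g. g \<in> H \<Longrightarrow> Phi m g x = x" by auto
    have xj: "x (-1) = -2 * x j" if j: "j \<in> {1..int m}" for j
    proof -
      obtain h where h: "h \<in> H" "h j = - j" using fl j by blast
      have "Phi m h x j = x j" using inv[OF h(1)] by simp
      then show ?thesis using PhiCj[OF sp[OF h(1)], of j x] j h(2) by simp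
    qed
    have m1: "(1::int) \<in> {1..int m}" using m by simp
    define b where "b = x 1"
    define a where "a = x 0 + 2 * b"
    have "x = (\<lambda>j. a * lb 0 j + b * Kvec m j)"
    proof
      fix j
      show "x j = a * lb 0 j + b * Kvec m j"
      proof -
        consider "j = -1" | "j = 0" | "1 \<le> j \<and> j \<le> int m" | "j \<notin> {-1..int m}" by fastforce
        then show ?thesis
        proof cases
          case 1 then show ?thesis using xj[OF m1] by (simp add: Kvec_val lb_def b_def)
        next
          case 2 then show ?thesis by (simp add: Kvec_val lb_def a_def)
        next
          case 3
          then have "x j = b" using xj[OF m1] xj[of j] unfolding b_def by simp
          then show ?thesis using 3 by (simp add: Kvec_val lb_def)
        next
          case 4
          then have "x j = 0" using xl by (auto simp: lattice_def)
          then show ?thesis using 4 by (auto simp: Kvec_val lb_def)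
        qed
      qed
    qed
    then show "x \<in> {\<lambda>j. a * lb 0 j + b * Kvec m j |a b. True}" by blast
  qed
  show "{\<lambda>j. a * lb 0 j + b * Kvec m j |a b. True} \<subseteq> {x \<in> lattice m. \<forall>g\<in>H. Phi m g x = x}"
  proof
    fix v assume "v \<in> {\<lambda>j. a * lb 0 j + b * Kvec m j |a b. True}"
    then obtain a b where v: "v = (\<lambda>j. a * lb 0 j + b * Kvec m j)" by blast
    have vv: "v j = (if j = -1 then -2 * b else if j = 0 then a - 2 * b else if 1 \<le> j \<and> j \<le> int m then b else 0)" for j
      unfolding v by (simp add: Kvec_val lb_def)
    have vl: "v \<in> lattice m" unfolding lattice_def using vv by auto
    have "Phi m h v = v" if h: "h \<in> H" for h
    proof
      fix j
      have sh: "signed_perm m h" by (rule sp[OF h])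
      have ev: "even (tcount m h)" using HD h WD_even by blast
      consider "j = -1" | "j = 0" | "1 \<le> j \<and> j \<le> int m" | "j \<notin> {-1..int m}" by fastforce
      then show "Phi m h v j = v j"
      proof cases
        case 1 then show ?thesis by (simp add: PhiCm1[OF sh])
      next
        case 2
        have s: "(\<Sum>i\<in>{1..int m}. if inv h i < 0 then v i else 0) = b * tU {1..int m} (inv h)"
          unfolding tU_def sum_distrib_left by (rule sum.cong) (auto simp: vv)
        have t: "tU {1..int m} (inv h) = int (tcount m h)"
          using tU_inv[OF sh order_refl invar_full[OF sh]] tcount_tU by simp
        have "2 * int (tcount m h div 2) = int (tcount m h)" using ev by (metis dvd_mult_div_cancel even_of_nat of_nat_div of_nat_numeral dvd_div_mult_self)
        then show ?thesis using 2 s t by (simp add: PhiC0[OF sh] vv algebra_simps)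
      next
        case 3
        then have jr: "j \<in> {1..int m}" by simp
        have k: "\<bar>h j\<bar> \<in> {1..int m}" "h j \<noteq> 0" using sp_range[OF sh jr] by auto
        show ?thesis
        proof (cases "h j < 0")
          case True
          then have "1 \<le> - h j \<and> - h j \<le> int m" using k by auto
          then show ?thesis using 3 True by (simp add: PhiCj[OF sh] vv)
        next
          case False
          then have "1 \<le> h j \<and> h j \<le> int m" using k by auto
          then show ?thesis using 3 False k by (simp add: PhiCj[OF sh] vv)
        qed
      next
        case 4 then show ?thesis using vv[of j] by (auto simp: PhiC_out[OF sh])
      qed
    qed
    then show "v \<in> {x \<in> lattice m. \<forall>g\<in>H. Phi m g x = x}" using vl by blast
  qed
qed

theorem lemma6p2:
  fixes n n' :: nat and G :: "(int \<Rightarrow> int) set"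
  assumes "n \<ge> 1"
    and "sp_subgroup n G" and "G \<subseteq> WD n"
    and "cond_H1 n G" and "rel_minimal n G" and "minimal n G"
    and "n' \<ge> 1" and "n' \<le> n" and "is_pr_orbit n G {1..int n'}"
  defines "N \<equiv> (if \<forall>g\<in>G. sgn_char n' (gO n' g) = 1 then n' else n' + 1)"
  shows "PO n' ` G \<subseteq> WD N \<and> rel_minimal N (PO n' ` G) \<and> cond_H1 N (PO n' ` G)"
proof -
  note Gs = assms(2) and GD = assms(3) and nn = assms(8)
  define Oo where "Oo = {1..int n'}"
  have Oinv: "\<forall>g\<in>G. invar g {1..int n'}"
  proof (intro ballI)
    fix g assume g: "g \<in> G"
    show "invar g {1..int n'}" unfolding invar_def
    proof
      fix i assume i: "i \<in> {1..int n'}"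
      then have "{pr g i |g. g \<in> G} = {1..int n'}" using assms(9) by (auto simp: is_pr_orbit_def)
      then show "\<bar>g i\<bar> \<in> {1..int n'}" using g by (auto simp: pr_def)
    qed
  qed
  note ctx = Gs GD nn Oinv
  have Osub: "Oo \<subseteq> {1..int n}" unfolding Oo_def using nn by auto
  have finO: "finite Oo" unfolding Oo_def by simp
  define allE where "allE = (\<forall>g\<in>G. even (tU Oo g))"
  have Ndef: "N = (if allE then n' else n' + 1)"
    unfolding N_def allE_def Oo_def using sgnO[OF ctx] by (auto split: if_splits)
  have N1: "N \<ge> 1" using Ndef assms(7) by simp
  have tUN: "tU {1..int n' + 1} f = tU Oo f + (if f (int n' + 1) < 0 then 1 else 0)" for f
  proof -
    have "{1..int n' + 1} = Oo \<union> {int n' + 1}" unfolding Oo_def by auto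
    then show ?thesis using tU_union[of Oo "{int n' + 1}" f] finO unfolding Oo_def by (simp add: tU_def)
  qed
  have P1: "PO n' ` G \<subseteq> WD N"
  proof
    fix x assume "x \<in> PO n' ` G"
    then obtain g where g: "g \<in> G" "x = PO n' g" by blast
    show "x \<in> WD N"
    proof (cases allE)
      case True
      then have ev: "even (tU Oo g)" using g allE_def by blast
      have sp: "signed_perm n' (PO n' g)" using PO_sp0[OF ctx g(1)] ev unfolding Oo_def by simp
      have "PO n' g = gO n' g" using PO_eq[OF ctx g(1)] ev unfolding Oo_def by simp
      then have "sgn_char n' (PO n' g) = 1" using sgnO[OF ctx g(1)] ev unfolding Oo_def by simp
      then show ?thesis using sp g True Ndef by (simp add: WD_def WB_def)
    next
      case False
      have sp: "signed_perm (n' + 1) (PO n' g)" by (rule PO_sp1[OF ctx g(1)])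
      have e: "int (n' + 1) = int n' + 1" by simp
      have a: "int (tcount (n' + 1) (PO n' g)) = tU {1..int n' + 1} (PO n' g)"
        using tcount_tU[of "n' + 1" "PO n' g"] unfolding e .
      have b: "tU {1..int n' + 1} (PO n' g) = tU Oo g + (if even (tU Oo g) then 0 else 1)"
        using tUN[of "PO n' g"] PO_N[OF ctx g(1)] tU_PO_O[OF ctx g(1), of Oo]
        unfolding Oo_def by auto
      have "even (int (tcount (n' + 1) (PO n' g)))" unfolding a b by (cases "even (tU Oo g)") simp_all
      then have "even (tcount (n' + 1) (PO n' g))" by simp
      then have "sgn_char (n' + 1) (PO n' g) = 1" by (simp add: sgn_char_def)
      then show ?thesis using sp g False Ndef by (simp add: WD_def WB_def)
    qed
  qed
  have NO: "{1..int N} \<subseteq> Oo \<union> {int n' + 1}" using Ndef unfolding Oo_def by auto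
  have NN: "\<not> allE \<Longrightarrow> N = n' + 1" using Ndef by simp
  have NA: "allE \<Longrightarrow> N = n'" using Ndef by simp
  have P2: "rel_minimal N (PO n' ` G)"
  proof (rule RM[OF N1 P1], intro ballI)
    fix j assume j: "j \<in> {1..int N}"
    show "\<exists>h\<in>PO n' ` G. h j = - j"
    proof (cases "j \<in> Oo")
      case True
      then obtain g where g: "g \<in> G" "g j = - j" using assms(6) Osub by (auto simp: minimal_def)
      then show ?thesis using PO_O[OF ctx g(1)] True unfolding Oo_def by force
    next
      case False
      then have jN: "j = int n' + 1" using j NO by auto
      then have "\<not> allE" using j NA by auto
      then obtain g where g: "g \<in> G" "odd (tU Oo g)" unfolding allE_def by blast
      then show ?thesis using PO_N[OF ctx g(1)] jN unfolding Oo_def by force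
    qed
  qed
  have P3: "cond_H1 N (PO n' ` G)"
    unfolding cond_H1_def
  proof (intro allI impI)
    fix Hb assume "sp_subgroup N Hb \<and> Hb \<subseteq> PO n' ` G"
    then have Hbs: "sp_subgroup N Hb" and HbG: "Hb \<subseteq> PO n' ` G" by auto
    have HbD: "Hb \<subseteq> WD N" using HbG P1 by blast
    define H where "H = {g\<in>G. PO n' g \<in> Hb}"
    have HG: "H \<subseteq> G" unfolding H_def by auto
    have Hs: "sp_subgroup n H"
      unfolding sp_subgroup_def
    proof (intro conjI ballI)
      show "H \<subseteq> WB n" using HG Gs by (auto simp: sp_subgroup_def)
      show "id \<in> H" unfolding H_def using sub_id[OF Gs] sub_id[OF Hbs] PO_id[OF ctx] by simp
      fix f assume f: "f \<in> H"
      show "inv f \<in> H" using f sub_inv[OF Gs] sub_inv[OF Hbs] PO_inv[OF ctx] unfolding H_def by auto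
      fix g assume g: "g \<in> H"
      show "f \<circ> g \<in> H" using f g sub_comp[OF Gs] sub_comp[OF Hbs] PO_hom[OF ctx] unfolding H_def by auto
    qed
    have HD: "H \<subseteq> WD n" using HG GD by blast
    have CH: "Crit n H"
    proof (rule H1_Crit[OF Hs HD])
      show "H1_vanishes n H" using assms(4) Hs HG unfolding cond_H1_def by blast
    qed
    have spH: "\<And>h. h \<in> H \<Longrightarrow> signed_perm n h" using sub_sp[OF Hs] .
    have hG: "\<And>h. h \<in> H \<Longrightarrow> h \<in> G" using HG by blast
    have hHb: "\<And>h. h \<in> H \<Longrightarrow> PO n' h \<in> Hb" unfolding H_def by blast
    have Hbel: "\<And>hb. hb \<in> Hb \<Longrightarrow> \<exists>h\<in>H. hb = PO n' h" using HbG unfolding H_def by blast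
    have FO: "flipp Hb j = flipp H j" if j: "j \<in> Oo" for j
    proof
      assume "flipp Hb j"
      then obtain hb where hb: "hb \<in> Hb" "hb j = - j" by (auto simp: flipp_def)
      then obtain h where h: "h \<in> H" "hb = PO n' h" using Hbel by blast
      then show "flipp H j" using hb PO_O[OF ctx hG[OF h(1)]] j unfolding flipp_def Oo_def by auto
    next
      assume "flipp H j"
      then obtain h where h: "h \<in> H" "h j = - j" by (auto simp: flipp_def)
      then show "flipp Hb j" using hHb[OF h(1)] PO_O[OF ctx hG[OF h(1)]] j unfolding flipp_def Oo_def by force
    qed
    have FN: "flipp Hb (int n' + 1) \<Longrightarrow> \<exists>h\<in>H. odd (tU Oo h)"
    proof -
      assume "flipp Hb (int n' + 1)"
      then obtain hb where hb: "hb \<in> Hb" "hb (int n' + 1) = - (int n' + 1)" by (auto simp: flipp_def)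
      then obtain h where h: "h \<in> H" "hb = PO n' h" using Hbel by blast
      then show ?thesis using hb PO_N[OF ctx hG[OF h(1)]] unfolding Oo_def by (auto split: if_splits)
    qed
    define Op where "Op = {int n' + 1..int n}"
    have O's: "Op \<subseteq> {1..int n}" unfolding Op_def by auto
    have OO': "{1..int n} = Oo \<union> Op" "Oo \<inter> Op = {}" unfolding Oo_def Op_def using nn by auto
    have invO: "\<And>h. h \<in> H \<Longrightarrow> invar h Oo" using Oinv hG unfolding Oo_def by blast
    have invO': "invar h Op" if h: "h \<in> H" for h
      unfolding invar_def
    proof
      fix i assume i: "i \<in> Op"
      then have ir: "i \<in> {1..int n}" using O's by auto
      have k: "\<bar>h i\<bar> \<in> {1..int n}" using sp_range[OF spH[OF h] ir] by simp
      have "\<bar>h i\<bar> \<notin> Oo" using invar_back[OF spH[OF h] Osub invO[OF h] ir] i OO' by auto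
      then show "\<bar>h i\<bar> \<in> Op" using k OO' by auto
    qed
    have tUn: "tU {1..int n} h = tU Oo h + tU Op h" for h
      using tU_union[of Oo Op h] OO' finO unfolding Op_def by simp
    have evn: "\<And>h. h \<in> H \<Longrightarrow> even (tU {1..int n} h)" using WD_even_tU HD by blast
    have evO: "even (tU Oo h)" if h: "h \<in> H" and nfO': "\<forall>j\<in>Op. \<not> flipp H j" for h
    proof -
      have "even (tU Op h)" by (rule split_even[OF Hs O's _ nfO' h]) (use invO' in blast)
      then show ?thesis using evn[OF h] tUn[of h] by simp
    qed
    show "H1_vanishes N Hb"
    proof (rule Crit_H1[OF Hbs HbD])
      show "Crit N Hb" unfolding Crit_def
      proof (intro allI impI)
        fix Ub assume "Ub \<subseteq> {1..int N} \<and> (\<forall>h\<in>Hb. invar h Ub) \<and> (\<forall>h\<in>Hb. even (tU Ub h))"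
        then have Ubs: "Ub \<subseteq> {1..int N}" and Ubi: "\<And>h. h \<in> Hb \<Longrightarrow> invar h Ub"
          and Ube: "\<And>h. h \<in> Hb \<Longrightarrow> even (tU Ub h)" by auto
        define U where "U = Ub \<inter> Oo"
        have Us: "U \<subseteq> {1..int n}" unfolding U_def using Osub by auto
        have UO: "U \<subseteq> Oo" unfolding U_def by auto
        have finU: "finite U" using finO UO finite_subset by blast
        have invU: "invar h U" if h: "h \<in> H" for h
          unfolding invar_def
        proof
          fix i assume i: "i \<in> U"
          then have "\<bar>PO n' h i\<bar> \<in> Ub" using Ubi[OF hHb[OF h]] unfolding U_def invar_def by blast
          moreover have "PO n' h i = h i" using PO_O[OF ctx hG[OF h]] i unfolding U_def Oo_def by auto
          moreover have "\<bar>h i\<bar> \<in> Oo" using invO[OF h] i unfolding U_def invar_def by blast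
          ultimately show "\<bar>h i\<bar> \<in> U" unfolding U_def by simp
        qed
        have tUsplit: "tU Ub (PO n' h) = tU U h + (if int n' + 1 \<in> Ub \<and> odd (tU Oo h) then 1 else 0)"
          if h: "h \<in> H" for h
        proof -
          have e: "Ub = U \<union> (Ub \<inter> {int n' + 1})" using Ubs NO unfolding U_def by auto
          have "tU Ub (PO n' h) = tU U (PO n' h) + tU (Ub \<inter> {int n' + 1}) (PO n' h)"
            by (subst e, rule tU_union) (use finU in \<open>auto simp: U_def Oo_def\<close>)
          also have "tU U (PO n' h) = tU U h" using tU_PO_O[OF ctx hG[OF h]] UO unfolding Oo_def by simp
          also have "tU (Ub \<inter> {int n' + 1}) (PO n' h) = (if int n' + 1 \<in> Ub \<and> odd (tU Oo h) then 1 else 0)"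
            using PO_N[OF ctx hG[OF h]] unfolding Oo_def by (auto simp: tU_def)
          finally show ?thesis .
        qed
        have tUO: "tU Oo h = tU U h + tU (Oo - U) h" for h
        proof -
          have "Oo = U \<union> (Oo - U)" using UO by auto
          then show ?thesis using tU_union[of U "Oo - U" h] finU finO by (metis Diff_disjoint finite_Diff)
        qed
        have invOU: "invar h (Oo - U)" if h: "h \<in> H" for h
          unfolding invar_def
        proof
          fix i assume i: "i \<in> Oo - U"
          then have ir: "i \<in> {1..int n}" using Osub by auto
          have "\<bar>h i\<bar> \<in> Oo" using invO[OF h] i unfolding invar_def by blast
          moreover have "\<bar>h i\<bar> \<notin> U" using invar_back[OF spH[OF h] Us invU[OF h] ir] i by auto
          ultimately show "\<bar>h i\<bar> \<in> Oo - U" by simp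
        qed
        have OUs: "Oo - U \<subseteq> {1..int n}" using Osub by auto
        show "(\<forall>j\<in>Ub. \<not> flipp Hb j) \<or> (\<forall>j\<in>{1..int N} - Ub. \<not> flipp Hb j)"
        proof (cases "int n' + 1 \<in> Ub")
          case False
          then have UbU: "Ub = U" using Ubs NO unfolding U_def by auto
          have evU: "even (tU U h)" if h: "h \<in> H" for h
            using Ube[OF hHb[OF h]] tUsplit[OF h] False by simp
          have "(\<forall>j\<in>U. \<not> flipp H j) \<or> (\<forall>j\<in>{1..int n} - U. \<not> flipp H j)"
            using CH Us invU evU unfolding Crit_def by blast
          then show ?thesis
          proof
            assume a: "\<forall>j\<in>U. \<not> flipp H j"
            have "\<forall>j\<in>Ub. \<not> flipp Hb j" using a FO UO UbU by auto
            then show ?thesis by blast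
          next
            assume b: "\<forall>j\<in>{1..int n} - U. \<not> flipp H j"
            have "\<forall>j\<in>{1..int N} - Ub. \<not> flipp Hb j"
            proof
              fix j assume j: "j \<in> {1..int N} - Ub"
              show "\<not> flipp Hb j"
              proof (cases "j \<in> Oo")
                case True
                then show ?thesis using FO b j UbU Osub by auto
              next
                case False
                then have jN: "j = int n' + 1" using j NO by auto
                have "even (tU Oo h)" if h: "h \<in> H" for h
                proof -
                  have "even (tU (Oo - U) h)"
                    by (rule split_even[OF Hs OUs _ _ h]) (use invOU b Osub in auto)
                  then show ?thesis using tUO[of h] evU[OF h] by simp
                qed
                then show ?thesis using FN jN by blast
              qed
            qed
            then show ?thesis by blast
          qed
        next
          case True
          then have NN1: "N = n' + 1" using Ubs NA NN by (cases allE) auto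
          have evOU: "even (tU (Oo - U) h)" if h: "h \<in> H" for h
          proof -
            have "even (tU U h + (if odd (tU Oo h) then 1 else 0))"
              using Ube[OF hHb[OF h]] tUsplit[OF h] True by simp
            then show ?thesis using tUO[of h] by (cases "even (tU U h)"; cases "even (tU (Oo - U) h)") (auto split: if_splits)
          qed
          have "(\<forall>j\<in>Oo - U. \<not> flipp H j) \<or> (\<forall>j\<in>{1..int n} - (Oo - U). \<not> flipp H j)"
            using CH OUs invOU evOU unfolding Crit_def by blast
          then show ?thesis
          proof
            assume a: "\<forall>j\<in>Oo - U. \<not> flipp H j"
            have "\<forall>j\<in>{1..int N} - Ub. \<not> flipp Hb j"
            proof
              fix j assume j: "j \<in> {1..int N} - Ub"
              then have "j \<in> Oo - U" using True NO unfolding U_def by auto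
              then show "\<not> flipp Hb j" using a FO by auto
            qed
            then show ?thesis by blast
          next
            assume b: "\<forall>j\<in>{1..int n} - (Oo - U). \<not> flipp H j"
            have "\<forall>j\<in>Ub. \<not> flipp Hb j"
            proof
              fix j assume j: "j \<in> Ub"
              show "\<not> flipp Hb j"
              proof (cases "j \<in> Oo")
                case True
                then have "j \<in> U" using j unfolding U_def by simp
                then show ?thesis using FO True b Us by auto
              next
                case False
                then have jN: "j = int n' + 1" using j Ubs NO by auto
                have nf: "\<forall>j\<in>Op. \<not> flipp H j" using b O's OO' by auto
                then show ?thesis using FN jN evO by blast
              qed
            qed
            then show ?thesis by blast
          qed
        qed
      qed
    qed
  qed
  show ?thesis using P1 P2 P3 by blast
qed

end
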